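(* Let $d\ge 1$ and $g(t)=e^{-\pi|t|^2}$, $t\in\mathbb{R}^d$. Suppose there exist $R>0$, $N>1$ and $f\in L^2(\mathbb{R}^d)$, $f\neq 0$, such that \[ |V_g f(x,\omega)|\le \frac{|\langle f,g\rangle|}{N}\quad\text{for all } x\in\mathbb{R}^d \text{ and all } \omega\in\mathbb{R}^d \text{ with } |\omega|=R. \] Then $R>\sqrt{\dfrac{\log N}{\pi}}$.
   Context: For $f,g\in L^2(\mathbb{R}^d)$, the short-time Fourier transform is $V_g f(x,\omega)=\int_{\mathbb{R}^d} e^{-2\pi i t\cdot\omega} f(t)\overline{g(t-x)}\,dt$ for $(x,\omega)\in\mathbb{R}^{2d}$, and $\langle f,g\rangle=\int_{\mathbb{R}^d} f(t)\overline{g(t)}\,dt$ is the $L^2$ inner product. $|\cdot|$ denotes the Euclidean norm and $\log$ the natural logarithm. *)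

theory Defs
  imports "HOL-Analysis.Analysis"
begin

text \<open>Functions on R^d are modelled on an arbitrary Euclidean space 'a (dimension DIM('a) >= 1).\<close>

definition square_integrable :: "('a::euclidean_space \<Rightarrow> complex) \<Rightarrow> bool" where
  "square_integrable f \<longleftrightarrow> f \<in> borel_measurable lebesgue \<and>
     integrable lebesgue (\<lambda>t. (norm (f t))\<^sup>2)"

definition gauss :: "'a::euclidean_space \<Rightarrow> complex" where
  "gauss t = complex_of_real (exp (- pi * (norm t)\<^sup>2))"

definition stft :: "('a::euclidean_space \<Rightarrow> complex) \<Rightarrow> ('a \<Rightarrow> complex) \<Rightarrow> 'a \<Rightarrow> 'a \<Rightarrow> complex" where
  "stft g f x \<omega> = (LINT t|lebesgue. exp (- (2 * pi * \<i> * complex_of_real (t \<bullet> \<omega>))) * f t * cnj (g (t - x)))"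

definition l2_inner :: "('a::euclidean_space \<Rightarrow> complex) \<Rightarrow> ('a \<Rightarrow> complex) \<Rightarrow> complex" where
  "l2_inner f g = (LINT t|lebesgue. f t * cnj (g t))"

end

theory Submission
  imports Defs "HOL-Complex_Analysis.Complex_Analysis" "HOL-Probability.Distributions" "HOL-Real_Asymp.Real_Asymp"
begin

lemma norm_exp_sub_one_sub_le:
  fixes z :: complex
  shows "norm (exp z - 1 - z) \<le> norm z ^ 2 * exp (norm z)"
proof -
  have sums: "(\<lambda>k. z ^ (k + 2) /\<^sub>R fact (k + 2)) sums (exp z - (\<Sum>k<2. z ^ k /\<^sub>R fact k))"
    by (intro sums_split_initial_segment exp_converges)
  have sn: "summable (\<lambda>k. norm (z ^ (k + 2) /\<^sub>R fact (k + 2)))"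
    using summable_norm_exp[of z]
    by (intro summable_norm summable_ignore_initial_segment)
       (auto simp: norm_power norm_divide divide_simps)
  have "exp z - 1 - z = (\<Sum>k. z ^ (k + 2) /\<^sub>R fact (k + 2))"
    using sums by (simp add: sums_iff eval_nat_numeral)
  also have "norm \<dots> \<le> (\<Sum>k. norm (z ^ (k + 2) /\<^sub>R fact (k + 2)))"
    using sn by (rule summable_norm)
  also have "\<dots> \<le> (\<Sum>k. norm z ^ 2 * (norm z ^ k /\<^sub>R fact k))"
  proof (rule suminf_le)
    fix k :: nat
    have "norm (z ^ (k + 2) /\<^sub>R fact (k + 2)) = norm z ^ 2 * (norm z ^ k / fact (k+2))"
      unfolding norm_scaleR norm_power power_add
      by (simp add: abs_of_pos divide_inverse mult_ac norm_mult norm_power del: fact_Suc)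
    also have "\<dots> \<le> norm z ^ 2 * (norm z ^ k / fact k)"
      by (intro mult_left_mono divide_left_mono fact_mono) auto
    finally show "norm (z ^ (k + 2) /\<^sub>R fact (k + 2)) \<le> norm z ^ 2 * (norm z ^ k /\<^sub>R fact k)"
      by (simp add: divide_inverse_commute)
  next
    show "summable (\<lambda>k. norm (z ^ (k + 2) /\<^sub>R fact (k + 2)))" by (rule sn)
    show "summable (\<lambda>k. norm z ^ 2 * (norm z ^ k /\<^sub>R fact k))"
      by (intro summable_mult exp_converges[THEN sums_summable])
  qed
  also have "\<dots> = norm z ^ 2 * exp (norm z)"
    using sums_mult[OF exp_converges[of "norm z"], of "norm z ^ 2"] by (simp add: sums_iff)
  finally show ?thesis .
qed

lemma gauss1_integrable:
  fixes c :: real assumes "c > 0"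
  shows "integrable lborel (\<lambda>x::real. exp (- c * x\<^sup>2))"
proof -
  define s where "s = sqrt (1 / (2 * c))"
  have s: "s > 0" "s\<^sup>2 = 1 / (2*c)" using assms by (auto simp: s_def)
  have "exp (- c * x\<^sup>2) = sqrt (2 * pi * s\<^sup>2) * normal_density 0 s x" for x
  proof -
    have e: "-(x - 0)\<^sup>2 / (2 * s\<^sup>2) = - c * x\<^sup>2" using s(2) assms by simp
    have p: "sqrt (2 * pi * s\<^sup>2) > 0" using s(1) by simp
    show ?thesis unfolding normal_density_def e using p s(1) by simp
  qed
  then have e: "(\<lambda>x. exp (- c * x\<^sup>2)) = (\<lambda>x. sqrt (2 * pi * s\<^sup>2) * normal_density 0 s x)"
    by auto
  show ?thesis unfolding e by (rule integrable_mult_right) (rule integrable_normal_density, rule s(1))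
qed

lemma norm_sq_basis: "norm (x::'a::euclidean_space) ^ 2 = (\<Sum>b\<in>Basis. (x \<bullet> b)\<^sup>2)"
proof -
  have "norm x ^ 2 = x \<bullet> x" by (simp add: power2_norm_eq_inner)
  also have "\<dots> = (\<Sum>b\<in>Basis. (x \<bullet> b) * (x \<bullet> b))" by (rule euclidean_inner)
  finally show ?thesis by (simp add: power2_eq_square)
qed

lemma gauss_integrable:
  fixes c :: real assumes "c > 0"
  shows "integrable lborel (\<lambda>x::'a::euclidean_space. exp (- c * norm x ^ 2))"
proof (rule integrableI_bounded)
  show "(\<lambda>x::'a. exp (- c * norm x ^ 2)) \<in> borel_measurable lborel" by measurable
  have eq: "exp (- c * norm x ^ 2) = (\<Prod>b\<in>Basis. exp (- c * (x \<bullet> b)\<^sup>2))" for x :: 'a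
    by (simp add: norm_sq_basis sum_distrib_left exp_sum[symmetric] sum_negf)
  have "(\<integral>\<^sup>+x. ennreal (norm (exp (- c * norm (x::'a) ^ 2))) \<partial>lborel)
      = (\<integral>\<^sup>+x. (\<Prod>b\<in>(Basis::'a set). ennreal (exp (- c * (x \<bullet> b)\<^sup>2))) \<partial>lborel)"
    apply (rule nn_integral_cong)
    apply (subst eq)
    by (auto simp: prod_ennreal abs_prod)
  also have "\<dots> = (\<Prod>b\<in>(Basis::'a set). (\<integral>\<^sup>+t. ennreal (exp (- c * t\<^sup>2)) \<partial>lborel))"
    by (rule nn_integral_lborel_prod) auto
  also have "\<dots> < \<infinity>"
  proof -
    have "integrable lborel (\<lambda>t::real. exp (- c * t\<^sup>2))" by (rule gauss1_integrable[OF assms])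
    then have "(\<integral>\<^sup>+t. ennreal (norm (exp (- c * t\<^sup>2))) \<partial>lborel) < \<infinity>"
      by (simp add: integrable_iff_bounded)
    then have "(\<integral>\<^sup>+t. ennreal (exp (- c * t\<^sup>2)) \<partial>lborel) \<noteq> top" by simp
    then have "(\<Prod>b\<in>(Basis::'a set). (\<integral>\<^sup>+t. ennreal (exp (- c * t\<^sup>2)) \<partial>lborel)) \<noteq> top"
      by (simp only: ennreal_prod_eq_top) auto
    then show ?thesis by (simp add: top.not_eq_extremum)
  qed
  finally show "(\<integral>\<^sup>+x. ennreal (norm (exp (- c * norm (x::'a) ^ 2))) \<partial>lborel) < \<infinity>" .
qed

lemma exp_quad_bound:
  fixes c a r :: real assumes "c > 0"
  shows "exp (- c * r\<^sup>2 + a * r) \<le> exp (a\<^sup>2 / (2 * c)) * exp (- c * r\<^sup>2 / 2)"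
proof -
  have "0 \<le> (c * r - a)\<^sup>2" by simp
  then have "- c * r\<^sup>2 + a * r \<le> a\<^sup>2 / (2 * c) + (- c * r\<^sup>2 / 2)"
    using assms by (simp add: field_simps power2_eq_square)
  then show ?thesis by (simp add: exp_add[symmetric])
qed

lemma lborel_shift_distr: "distr lborel borel (\<lambda>x::'a::euclidean_space. t + x) = lborel"
proof -
  have "lborel = density (distr lborel borel (\<lambda>x::'a. t + (1::real) *\<^sub>R x)) (\<lambda>_. \<bar>1::real\<bar>^DIM('a))"
    by (rule lborel_affine) simp
  then show ?thesis by (simp add: density_1)
qed

lemma lborel_integral_shift:
  fixes g :: "'a::euclidean_space \<Rightarrow> 'b::{banach, second_countable_topology}"
  assumes [measurable]: "g \<in> borel_measurable borel"
  shows "(LINT x|lborel. g (t + x)) = integral\<^sup>L lborel g"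
proof -
  have "integral\<^sup>L lborel g = integral\<^sup>L (distr lborel borel (\<lambda>x::'a. t + x)) g"
    by (simp add: lborel_shift_distr)
  also have "\<dots> = (LINT x|lborel. g (t + x))"
    by (rule integral_distr) auto
  finally show ?thesis by simp
qed

lemma lborel_integrable_shift:
  fixes g :: "'a::euclidean_space \<Rightarrow> 'b::{banach, second_countable_topology}"
  assumes [measurable]: "g \<in> borel_measurable borel"
  shows "integrable lborel (\<lambda>x. g (t + x)) \<longleftrightarrow> integrable lborel g"
proof -
  have "integrable lborel g \<longleftrightarrow> integrable (distr lborel borel (\<lambda>x::'a. t + x)) g"
    by (simp add: lborel_shift_distr)
  also have "\<dots> \<longleftrightarrow> integrable lborel (\<lambda>x. g (t + x))"
    by (rule integrable_distr_eq) auto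
  finally show ?thesis by simp
qed

lemma lborel_integral_scale:
  fixes g :: "'a::euclidean_space \<Rightarrow> 'b::{banach, second_countable_topology}"
  assumes [measurable]: "g \<in> borel_measurable borel" and c: "c \<noteq> 0"
  shows "integral\<^sup>L lborel g = (\<bar>c\<bar>^DIM('a)) *\<^sub>R (LINT x|lborel. g (t + c *\<^sub>R x))"
proof -
  have "integral\<^sup>L lborel g = integral\<^sup>L (density (distr lborel borel (\<lambda>x::'a. t + c *\<^sub>R x)) (\<lambda>_. ennreal (\<bar>c\<bar>^DIM('a)))) g"
    using lborel_affine[OF c, of t] by simp
  also have "\<dots> = integral\<^sup>L (distr lborel borel (\<lambda>x::'a. t + c *\<^sub>R x)) (\<lambda>x. (\<bar>c\<bar>^DIM('a)) *\<^sub>R g x)"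
    by (rule integral_density) auto
  also have "\<dots> = (LINT x|lborel. (\<bar>c\<bar>^DIM('a)) *\<^sub>R g (t + c *\<^sub>R x))"
    by (rule integral_distr) auto
  also have "\<dots> = (\<bar>c\<bar>^DIM('a)) *\<^sub>R (LINT x|lborel. g (t + c *\<^sub>R x))"
    by simp
  finally show ?thesis .
qed

lemma norm_exp_mult_of_real: "norm (exp (z * complex_of_real r)) \<le> exp (norm z * \<bar>r\<bar>)"
proof -
  have "Re (z * complex_of_real r) = Re z * r" by simp
  also have "\<dots> \<le> \<bar>Re z\<bar> * \<bar>r\<bar>" by (metis abs_ge_self abs_mult)
  also have "\<dots> \<le> norm z * \<bar>r\<bar>" by (intro mult_right_mono abs_Re_le_cmod) auto
  finally show ?thesis by (simp add: norm_exp_eq_Re)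
qed

lemma abs_le_exp_abs: "\<bar>x::real\<bar> \<le> exp \<bar>x\<bar>"
  using exp_ge_add_one_self[of "\<bar>x\<bar>"] by linarith

lemma sq_le_2exp: "(x::real)\<^sup>2 \<le> 2 * exp \<bar>x\<bar>"
proof -
  have "1 + \<bar>x\<bar> + \<bar>x\<bar>^2/2 \<le> exp \<bar>x\<bar>"
    by (rule exp_lower_Taylor_quadratic) simp
  then show ?thesis by (simp add: power2_abs) 
qed

definition expint :: "('a::euclidean_space \<Rightarrow> complex) \<Rightarrow> bool" where
  "expint \<phi> \<longleftrightarrow> \<phi> \<in> borel_measurable borel \<and> (\<forall>a. integrable lborel (\<lambda>t. norm (\<phi> t) * exp (a * norm t)))"

lemma expint_bound_exp:
  "norm (exp (z * complex_of_real (t \<bullet> v))) \<le> exp ((norm z * norm v) * norm t)"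
proof -
  have "norm (exp (z * complex_of_real (t \<bullet> v))) \<le> exp (norm z * \<bar>t \<bullet> v\<bar>)"
    by (rule norm_exp_mult_of_real)
  also have "\<dots> \<le> exp ((norm z * norm v) * norm t)"
    using mult_left_mono[OF Cauchy_Schwarz_ineq2[of t v], of "norm z"]
    by (simp add: mult_ac)
  finally show ?thesis .
qed

lemma expint_integrable:
  assumes e: "expint \<phi>"
  shows "integrable lborel (\<lambda>t. \<phi> t * exp (z * complex_of_real (t \<bullet> v)))"
proof (rule Bochner_Integration.integrable_bound)
  show "integrable lborel (\<lambda>t. norm (\<phi> t) * exp ((norm z * norm v) * norm t))"
    using e unfolding expint_def by blast
  have [measurable]: "\<phi> \<in> borel_measurable borel" using e unfolding expint_def by blast
  show "(\<lambda>t. \<phi> t * exp (z * complex_of_real (t \<bullet> v))) \<in> borel_measurable lborel" by measurable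
  show "AE t in lborel. norm (\<phi> t * exp (z * complex_of_real (t \<bullet> v))) \<le> norm (norm (\<phi> t) * exp ((norm z * norm v) * norm t))"
  proof (intro AE_I2)
    fix t
    have "norm (\<phi> t * exp (z * complex_of_real (t \<bullet> v))) = norm (\<phi> t) * norm (exp (z * complex_of_real (t \<bullet> v)))"
      by (rule norm_mult)
    also have "\<dots> \<le> norm (\<phi> t) * exp ((norm z * norm v) * norm t)"
      by (rule mult_left_mono[OF expint_bound_exp]) simp
    also have "\<dots> = norm (norm (\<phi> t) * exp ((norm z * norm v) * norm t))" by simp
    finally show "norm (\<phi> t * exp (z * complex_of_real (t \<bullet> v))) \<le> norm (norm (\<phi> t) * exp ((norm z * norm v) * norm t))" .
  qed
qed

lemma expint_integrable':
  assumes e: "expint \<phi>"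
  shows "integrable lborel (\<lambda>t. \<phi> t * complex_of_real (t \<bullet> v) * exp (z * complex_of_real (t \<bullet> v)))"
proof (rule Bochner_Integration.integrable_bound)
  show "integrable lborel (\<lambda>t. norm (\<phi> t) * exp (((norm z + 1) * norm v) * norm t))"
    using e unfolding expint_def by blast
  have [measurable]: "\<phi> \<in> borel_measurable borel" using e unfolding expint_def by blast
  show "(\<lambda>t. \<phi> t * complex_of_real (t \<bullet> v) * exp (z * complex_of_real (t \<bullet> v))) \<in> borel_measurable lborel" by measurable
  show "AE t in lborel. norm (\<phi> t * complex_of_real (t \<bullet> v) * exp (z * complex_of_real (t \<bullet> v)))
          \<le> norm (norm (\<phi> t) * exp (((norm z + 1) * norm v) * norm t))"
  proof (intro AE_I2)
    fix t :: 'a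
    have "\<bar>t \<bullet> v\<bar> * norm (exp (z * complex_of_real (t \<bullet> v))) \<le> exp \<bar>t \<bullet> v\<bar> * exp (norm z * \<bar>t \<bullet> v\<bar>)"
      by (intro mult_mono abs_le_exp_abs norm_exp_mult_of_real) auto
    also have "\<dots> = exp ((norm z + 1) * \<bar>t \<bullet> v\<bar>)" by (simp add: exp_add[symmetric] algebra_simps)
    also have "\<dots> \<le> exp (((norm z + 1) * norm v) * norm t)"
      using mult_left_mono[OF Cauchy_Schwarz_ineq2[of t v], of "norm z + 1"]
      by (simp add: mult_ac)
    finally have "\<bar>t \<bullet> v\<bar> * norm (exp (z * complex_of_real (t \<bullet> v))) \<le> exp (((norm z + 1) * norm v) * norm t)" .
    then show "norm (\<phi> t * complex_of_real (t \<bullet> v) * exp (z * complex_of_real (t \<bullet> v)))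
          \<le> norm (norm (\<phi> t) * exp (((norm z + 1) * norm v) * norm t))"
      by (auto simp: norm_mult mult.assoc intro!: mult_left_mono)
  qed
qed

lemma expint_key_bound:
  fixes h z :: complex and r :: real
  assumes "norm h \<le> 1"
  shows "norm (exp (z * complex_of_real r) * (exp (h * complex_of_real r) - 1 - h * complex_of_real r))
         \<le> norm h ^ 2 * (2 * exp ((norm z + 2) * \<bar>r\<bar>))"
proof -
  have a: "norm (exp (z * complex_of_real r)) \<le> exp (norm z * \<bar>r\<bar>)" by (rule norm_exp_mult_of_real)
  have b: "norm (exp (h * complex_of_real r) - 1 - h * complex_of_real r) \<le> norm (h * complex_of_real r) ^ 2 * exp (norm (h * complex_of_real r))"
    by (rule norm_exp_sub_one_sub_le)
  have nh: "norm (h * complex_of_real r) = norm h * \<bar>r\<bar>" by (simp add: norm_mult)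
  have c: "exp (norm h * \<bar>r\<bar>) \<le> exp \<bar>r\<bar>"
    using assms by (simp add: mult_left_le_one_le)
  have d: "(norm h * \<bar>r\<bar>)^2 * exp (norm h * \<bar>r\<bar>) \<le> norm h ^ 2 * (2 * exp \<bar>r\<bar>) * exp \<bar>r\<bar>"
  proof -
    have "(norm h * \<bar>r\<bar>)^2 = norm h ^ 2 * r\<^sup>2" by (simp add: power_mult_distrib)
    moreover have "r\<^sup>2 \<le> 2 * exp \<bar>r\<bar>" by (rule sq_le_2exp)
    ultimately show ?thesis
      using c by (auto intro!: mult_mono mult_left_mono)
  qed
  have "norm (exp (z * complex_of_real r) * (exp (h * complex_of_real r) - 1 - h * complex_of_real r))
      = norm (exp (z * complex_of_real r)) * norm (exp (h * complex_of_real r) - 1 - h * complex_of_real r)"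
    by (rule norm_mult)
  also have "\<dots> \<le> exp (norm z * \<bar>r\<bar>) * ((norm h * \<bar>r\<bar>)^2 * exp (norm h * \<bar>r\<bar>))"
    using a b unfolding nh by (intro mult_mono) auto
  also have "\<dots> \<le> exp (norm z * \<bar>r\<bar>) * (norm h ^ 2 * (2 * exp \<bar>r\<bar>) * exp \<bar>r\<bar>)"
    using d by (intro mult_left_mono) auto
  also have "\<dots> = norm h ^ 2 * (2 * exp ((norm z + 2) * \<bar>r\<bar>))"
    by (simp add: exp_add[symmetric] algebra_simps)
  finally show ?thesis .
qed

lemma expint_deriv:
  fixes \<phi> :: "'a::euclidean_space \<Rightarrow> complex"
  assumes e: "expint \<phi>"
  shows "((\<lambda>\<zeta>. LINT t|lborel. \<phi> t * exp (\<zeta> * complex_of_real (t \<bullet> v))) has_field_derivative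
          (LINT t|lborel. \<phi> t * complex_of_real (t \<bullet> v) * exp (z * complex_of_real (t \<bullet> v)))) (at z)"
proof -
  have [measurable]: "\<phi> \<in> borel_measurable borel" using e unfolding expint_def by blast
  define F where "F = (\<lambda>\<zeta>. LINT t|lborel. \<phi> t * exp (\<zeta> * complex_of_real (t \<bullet> v)))"
  define D where "D = (LINT t|lborel. \<phi> t * complex_of_real (t \<bullet> v) * exp (z * complex_of_real (t \<bullet> v)))"
  define B where "B = (\<lambda>t. 2 * (norm (\<phi> t) * exp (((norm z + 2) * norm v) * norm t)))"
  define K where "K = (LINT t|lborel. B t)"
  have intB: "integrable lborel B"
    unfolding B_def using e unfolding expint_def by (intro integrable_mult_right) blast
  have key: "norm (F (z + h) - F z - h * D) \<le> norm h ^ 2 * K" if h: "norm h \<le> 1" for h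
  proof -
    let ?s = "\<lambda>t. complex_of_real (t \<bullet> v)"
    let ?g = "\<lambda>t. \<phi> t * (exp (z * ?s t) * (exp (h * ?s t) - 1 - h * ?s t))"
    have i1: "integrable lborel (\<lambda>t. \<phi> t * exp ((z + h) * ?s t))" by (rule expint_integrable[OF e])
    have i2: "integrable lborel (\<lambda>t. \<phi> t * exp (z * ?s t))" by (rule expint_integrable[OF e])
    have i3: "integrable lborel (\<lambda>t. \<phi> t * ?s t * exp (z * ?s t))" by (rule expint_integrable'[OF e])
    have "F (z + h) - F z - h * D
        = (LINT t|lborel. \<phi> t * exp ((z + h) * ?s t) - \<phi> t * exp (z * ?s t) - h * (\<phi> t * ?s t * exp (z * ?s t)))"
      unfolding F_def D_def using i1 i2 i3
      by (simp add: integral_diff integral_mult_right_zero)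
    also have "\<dots> = (LINT t|lborel. ?g t)"
      by (rule Bochner_Integration.integral_cong) (simp_all add: distrib_right exp_add algebra_simps)
    finally have eq: "F (z + h) - F z - h * D = (LINT t|lborel. ?g t)" .
    have ig: "integrable lborel ?g"
    proof -
      have "integrable lborel (\<lambda>t. \<phi> t * exp ((z + h) * ?s t) - \<phi> t * exp (z * ?s t) - h * (\<phi> t * ?s t * exp (z * ?s t)))"
        using i1 i2 i3 by (intro Bochner_Integration.integrable_diff integrable_mult_right) auto
      then show ?thesis
        by (rule Bochner_Integration.integrable_cong[THEN iffD1, rotated 2]) (simp_all add: distrib_right exp_add algebra_simps)
    qed
    have pw: "norm (?g t) \<le> norm h ^ 2 * B t" for t
    proof -
      have "norm (?g t) = norm (\<phi> t) * norm (exp (z * ?s t) * (exp (h * ?s t) - 1 - h * ?s t))"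
        by (rule norm_mult)
      also have "\<dots> \<le> norm (\<phi> t) * (norm h ^ 2 * (2 * exp ((norm z + 2) * \<bar>t \<bullet> v\<bar>)))"
        by (intro mult_left_mono expint_key_bound h) simp
      also have "\<dots> \<le> norm (\<phi> t) * (norm h ^ 2 * (2 * exp (((norm z + 2) * norm v) * norm t)))"
      proof -
        have "(norm z + 2) * \<bar>t \<bullet> v\<bar> \<le> (norm z + 2) * (norm t * norm v)"
          by (intro mult_left_mono Cauchy_Schwarz_ineq2) auto
        then show ?thesis by (intro mult_left_mono) (auto simp: mult_ac)
      qed
      also have "\<dots> = norm h ^ 2 * B t" by (simp add: B_def mult_ac)
      finally show ?thesis .
    qed
    have "norm (F (z + h) - F z - h * D) \<le> (LINT t|lborel. norm (?g t))"
      unfolding eq by (rule integral_norm_bound)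
    also have "\<dots> \<le> (LINT t|lborel. norm h ^ 2 * B t)"
      using ig intB pw by (intro integral_mono) auto
    also have "\<dots> = norm h ^ 2 * K" unfolding K_def by simp
    finally show ?thesis .
  qed
  have P: "norm ((F (z + h) - F z) / h - D) \<le> norm h * K" if h0: "h \<noteq> 0" and h1': "norm h < 1" for h
  proof -
    have h1: "norm h \<le> 1" using h1' by simp
    have "(F (z + h) - F z) / h - D = (F (z + h) - F z - h * D) / h"
      using h0 by (simp add: field_simps)
    then have "norm ((F (z + h) - F z) / h - D) = norm (F (z + h) - F z - h * D) / norm h"
      by (simp add: norm_divide)
    also have "\<dots> \<le> norm h ^ 2 * K / norm h"
      using key[OF h1] h0 by (intro divide_right_mono) auto
    also have "\<dots> = norm h * K" using h0 by (simp add: power2_eq_square)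
    finally show "norm ((F (z + h) - F z) / h - D) \<le> norm h * K" .
  qed
  have ev: "eventually (\<lambda>h. norm ((F (z + h) - F z) / h - D) \<le> norm h * K) (at 0)"
    unfolding eventually_at by (intro exI[of _ 1]) (auto intro!: P)
  have lim0: "((\<lambda>h. norm h * K) \<longlongrightarrow> 0) (at (0::complex))"
    by (auto intro!: tendsto_eq_intros)
  have "((\<lambda>h. (F (z + h) - F z) / h - D) \<longlongrightarrow> 0) (at 0)"
    by (rule Lim_null_comparison[OF ev lim0])
  then have "((\<lambda>h. (F (z + h) - F z) / h) \<longlongrightarrow> D) (at 0)"
    by (rule LIM_zero_cancel)
  then show ?thesis unfolding F_def[symmetric] D_def[symmetric] DERIV_def .
qed

lemma expint_holomorphic:
  assumes e: "expint \<phi>"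
  shows "(\<lambda>\<zeta>. LINT t|lborel. \<phi> t * exp (\<zeta> * complex_of_real (t \<bullet> v))) holomorphic_on S"
  unfolding holomorphic_on_def field_differentiable_def
  using expint_deriv[OF e] by (blast intro: has_field_derivative_at_within)

lemma lin_quad_bound:
  fixes a c r :: real assumes "c > 0"
  shows "a * r \<le> a\<^sup>2 / (4 * c) + c * r\<^sup>2"
proof -
  have eq: "(2 * c * r - a)\<^sup>2 = a\<^sup>2 + 4 * c\<^sup>2 * r\<^sup>2 - 4 * c * (a * r)"
    by (simp add: power2_eq_square algebra_simps)
  have h: "4 * c * (a * r) \<le> a\<^sup>2 + 4 * c\<^sup>2 * r\<^sup>2"
    using zero_le_power2[of "2 * c * r - a"] unfolding eq by linarith
  have "a * r \<le> (a\<^sup>2 + 4 * c\<^sup>2 * r\<^sup>2) / (4 * c)"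
    using h assms by (simp add: pos_le_divide_eq mult_ac)
  also have "\<dots> = a\<^sup>2 / (4 * c) + c * r\<^sup>2"
    using assms by (simp add: field_simps power2_eq_square)
  finally show ?thesis .
qed

lemma expint_I:
  fixes \<phi> :: "'a::euclidean_space \<Rightarrow> complex"
  assumes [measurable]: "\<phi> \<in> borel_measurable borel" and c: "c > 0"
    and int: "integrable lborel (\<lambda>t. norm (\<phi> t) * exp (c * norm t ^ 2))"
  shows "expint \<phi>"
  unfolding expint_def
proof (intro conjI allI)
  fix a :: real
  show "integrable lborel (\<lambda>t. norm (\<phi> t) * exp (a * norm t))"
  proof (rule Bochner_Integration.integrable_bound)
    show "integrable lborel (\<lambda>t. exp (a\<^sup>2 / (4 * c)) * (norm (\<phi> t) * exp (c * norm t ^ 2)))"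
      using int by (rule integrable_mult_right)
    show "(\<lambda>t. norm (\<phi> t) * exp (a * norm t)) \<in> borel_measurable lborel" by measurable
    show "AE t in lborel. norm (norm (\<phi> t) * exp (a * norm t)) \<le> norm (exp (a\<^sup>2 / (4 * c)) * (norm (\<phi> t) * exp (c * norm t ^ 2)))"
    proof (intro AE_I2)
      fix t :: 'a
      have "exp (a * norm t) \<le> exp (a\<^sup>2 / (4 * c) + c * norm t ^ 2)"
        using lin_quad_bound[OF c, of a "norm t"] by simp
      then have "norm (\<phi> t) * exp (a * norm t) \<le> norm (\<phi> t) * exp (a\<^sup>2 / (4 * c) + c * norm t ^ 2)"
        by (intro mult_left_mono) auto
      then show "norm (norm (\<phi> t) * exp (a * norm t)) \<le> norm (exp (a\<^sup>2 / (4 * c)) * (norm (\<phi> t) * exp (c * norm t ^ 2)))"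
        by (simp add: exp_add mult_ac)
    qed
  qed
qed simp

lemma gauss_expint:
  assumes "\<alpha> > 0"
  shows "expint (\<lambda>t::'a::euclidean_space. complex_of_real (exp (- pi * \<alpha> * norm t ^ 2)))"
proof (rule expint_I[where c = "pi * \<alpha> / 2"])
  show "(\<lambda>t::'a. complex_of_real (exp (- pi * \<alpha> * norm t ^ 2))) \<in> borel_measurable borel" by measurable
  show "0 < pi * \<alpha> / 2" using assms by simp
  have "integrable lborel (\<lambda>t::'a. exp (- (pi * \<alpha> / 2) * norm t ^ 2))"
    by (rule gauss_integrable) (use assms in simp)
  moreover have "norm (complex_of_real (exp (- pi * \<alpha> * norm t ^ 2))) * exp (pi * \<alpha> / 2 * norm t ^ 2)
      = exp (- (pi * \<alpha> / 2) * norm t ^ 2)" for t :: 'a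
    by (simp add: exp_add[symmetric] field_simps)
  ultimately show "integrable lborel (\<lambda>t::'a. norm (complex_of_real (exp (- pi * \<alpha> * norm t ^ 2))) * exp (pi * \<alpha> / 2 * norm t ^ 2))"
    by simp
qed

lemma zero_islimpt_reals: "(0::complex) islimpt range complex_of_real"
  unfolding islimpt_approachable
proof (intro allI impI)
  fix e :: real assume "e > 0"
  show "\<exists>x'\<in>range complex_of_real. x' \<noteq> 0 \<and> dist x' 0 < e"
  proof (rule bexI)
    show "complex_of_real (e/2) \<in> range complex_of_real" by (rule rangeI)
    show "complex_of_real (e/2) \<noteq> 0 \<and> dist (complex_of_real (e/2)) 0 < e"
      using \<open>e > 0\<close> by (simp add: dist_norm)
  qed
qed

lemma holo_const_on_reals:
  assumes "f holomorphic_on UNIV" and "\<And>r. f (complex_of_real r) = c"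
  shows "f z = c"
proof -
  have "f z - c = 0"
    apply (rule analytic_continuation[where f="\<lambda>z. f z - c" and S=UNIV and U="range complex_of_real" and \<xi>=0 and w=z])
    using assms zero_islimpt_reals by (auto intro!: holomorphic_intros)
  then show ?thesis by simp
qed

lemma gauss_ft:
  fixes y :: "'a::euclidean_space"
  assumes a: "\<alpha> > 0"
  shows "(LINT t|lborel. complex_of_real (exp (- pi * \<alpha> * norm t ^ 2)) * exp (\<i> * complex_of_real (t \<bullet> (2 * pi) *\<^sub>R y)))
       = complex_of_real (LINT t|lborel. exp (- pi * \<alpha> * norm (t::'a) ^ 2)) * exp (- pi * norm y ^ 2 / \<alpha>)"
proof -
  let ?g = "\<lambda>t::'a. complex_of_real (exp (- pi * \<alpha> * norm t ^ 2))"
  define v where "v = (2 * pi) *\<^sub>R y"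
  define \<Phi> where "\<Phi> = (\<lambda>\<zeta>. LINT t|lborel. ?g t * exp (\<zeta> * complex_of_real (t \<bullet> v)))"
  define I where "I = (LINT t|lborel. exp (- pi * \<alpha> * norm (t::'a) ^ 2))"
  define \<Psi> where "\<Psi> = (\<lambda>\<zeta>. exp (complex_of_real (- pi * norm y ^ 2 / \<alpha>) * \<zeta>\<^sup>2) * \<Phi> \<zeta>)"
  have holo: "\<Psi> holomorphic_on UNIV"
    unfolding \<Psi>_def \<Phi>_def
    by (intro holomorphic_intros expint_holomorphic gauss_expint a)
  have real: "\<Psi> (complex_of_real r) = complex_of_real I" for r
  proof -
    define w where "w = (r / \<alpha>) *\<^sub>R y"
    have pt: "exp (complex_of_real (- pi * norm y ^ 2 / \<alpha>) * (complex_of_real r)\<^sup>2) * (?g t * exp (complex_of_real r * complex_of_real (t \<bullet> v)))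
        = complex_of_real (exp (- pi * \<alpha> * norm (- w + t) ^ 2))" for t
    proof -
      have "- pi * r\<^sup>2 * (norm y ^ 2 / \<alpha>) + (- pi * \<alpha> * norm t ^ 2) + r * (t \<bullet> v) = - pi * \<alpha> * norm (- w + t) ^ 2"
      proof -
        have n1: "norm (- w + t) ^ 2 = norm t ^ 2 - 2 * (t \<bullet> w) + norm w ^ 2"
          by (simp add: power2_norm_eq_inner inner_diff_left inner_diff_right inner_commute)
        have n2: "t \<bullet> w = (r/\<alpha>) * (t \<bullet> y)" "norm w ^ 2 = (r/\<alpha>)^2 * norm y ^ 2"
          "t \<bullet> v = 2 * pi * (t \<bullet> y)"
          unfolding w_def v_def by (simp_all add: power_mult_distrib power_divide)
        show ?thesis unfolding n1 n2 using a by (simp add: field_simps power2_eq_square)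
      qed
      then have "exp (- pi * norm y ^ 2 / \<alpha> * r\<^sup>2) * (exp (- pi * \<alpha> * norm t ^ 2) * exp (r * (t \<bullet> v)))
          = exp (- pi * \<alpha> * norm (- w + t) ^ 2)"
        by (simp add: exp_add[symmetric] mult_ac)
      then show ?thesis
        by (simp only: of_real_power[symmetric] of_real_mult[symmetric] exp_of_real)
    qed
    have "\<Psi> (complex_of_real r) = (LINT t|lborel. exp (complex_of_real (- pi * norm y ^ 2 / \<alpha>) * (complex_of_real r)\<^sup>2) * (?g t * exp (complex_of_real r * complex_of_real (t \<bullet> v))))"
      unfolding \<Psi>_def \<Phi>_def by simp
    also have "\<dots> = (LINT t|lborel. complex_of_real (exp (- pi * \<alpha> * norm (- w + t) ^ 2)))"
      by (simp only: pt)
    also have "\<dots> = (LINT t|lborel. complex_of_real (exp (- pi * \<alpha> * norm (t::'a) ^ 2)))"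
      using lborel_integral_shift[of "\<lambda>t. complex_of_real (exp (- pi * \<alpha> * norm t ^ 2))" "-w"] by simp
    also have "\<dots> = complex_of_real I" unfolding I_def by simp
    finally show ?thesis .
  qed
  have "\<Psi> \<i> = complex_of_real I" by (rule holo_const_on_reals[OF holo real])
  then have "exp (complex_of_real (pi * norm y ^ 2 / \<alpha>)) * \<Phi> \<i> = complex_of_real I"
    unfolding \<Psi>_def by (simp add: power2_eq_square mult_ac)
  then have "\<Phi> \<i> = complex_of_real I * exp (- complex_of_real (pi * norm y ^ 2 / \<alpha>))"
    by (simp add: exp_minus field_simps)
  also have "exp (- complex_of_real (pi * norm y ^ 2 / \<alpha>)) = complex_of_real (exp (- pi * norm y ^ 2 / \<alpha>))"
    by (simp only: of_real_minus[symmetric] exp_of_real) simp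
  finally show ?thesis unfolding \<Phi>_def v_def I_def by (simp add: mult.commute)
qed

lemma mem_box_cplx: "z \<in> box (Complex a c) (Complex b d) \<longleftrightarrow> a < Re z \<and> Re z < b \<and> c < Im z \<and> Im z < d"
  by (auto simp: mem_box Basis_complex_def)

lemma mem_cbox_cplx: "z \<in> cbox (Complex a c) (Complex b d) \<longleftrightarrow> a \<le> Re z \<and> Re z \<le> b \<and> c \<le> Im z \<and> Im z \<le> d"
  by (auto simp: mem_box Basis_complex_def)

lemma norm_exp_sq: "norm (exp (- complex_of_real e * (z - complex_of_real x0)^2)) = exp (- e * ((Re z - x0)^2 - (Im z)^2))"
  by (simp add: norm_exp_eq_Re power2_eq_square algebra_simps)

lemma strip_bound_eps:
  fixes F :: "complex \<Rightarrow> complex"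
  assumes holo: "F holomorphic_on UNIV" and R: "R > 0"
    and bnd: "\<And>z. \<bar>Im z\<bar> \<le> R \<Longrightarrow> norm (F z) \<le> B"
    and bdry: "\<And>x. norm (F (Complex x R)) \<le> C" "\<And>x. norm (F (Complex x (-R))) \<le> C"
    and z0: "\<bar>Im z0\<bar> < R" and e: "e > 0"
  shows "norm (F z0) \<le> (C + e) * exp (e * R\<^sup>2)"
proof -
  define x0 where "x0 = Re z0"
  have lim: "((\<lambda>A. B * exp (- e * A\<^sup>2)) \<longlongrightarrow> 0) at_top" using e by real_asymp
  have "eventually (\<lambda>A. B * exp (- e * A\<^sup>2) < e) at_top"
    using order_tendstoD(2)[OF lim e] .
  then obtain N where N: "\<And>A. A \<ge> N \<Longrightarrow> B * exp (- e * A\<^sup>2) < e"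
    unfolding eventually_at_top_linorder by blast
  define A where "A = max N 1"
  have A: "A > 0" "B * exp (- e * A\<^sup>2) < e" using N[of A] by (auto simp: A_def)
  define G where "G = (\<lambda>z. F z * exp (- complex_of_real e * (z - complex_of_real x0)^2))"
  define S where "S = box (Complex (x0 - A) (-R)) (Complex (x0 + A) R)"
  have Sne: "S \<noteq> {}" using A R by (auto simp: S_def box_ne_empty Basis_complex_def)
  have holoG: "G holomorphic_on UNIV" unfolding G_def
    by (intro holomorphic_intros holomorphic_on_subset[OF holo]) auto
  have C0: "C \<ge> 0" using bdry(1)[of 0] norm_ge_zero order_trans by blast
  have "norm (G z0) \<le> (C + e) * exp (e * R\<^sup>2)"
  proof (rule maximum_modulus_frontier[where S = S and f = G and \<xi> = z0])
    show "G holomorphic_on interior S" using holoG holomorphic_on_subset by blast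
    show "continuous_on (closure S) G"
      using holoG holomorphic_on_imp_continuous_on continuous_on_subset by blast
    show "bounded S" unfolding S_def by (rule bounded_box)
    show "z0 \<in> S" using z0 A unfolding S_def mem_box_cplx x0_def by auto
  next
    fix z assume "z \<in> frontier S"
    then have zc: "z \<in> cbox (Complex (x0 - A) (-R)) (Complex (x0 + A) R)"
      and znb: "z \<notin> box (Complex (x0 - A) (-R)) (Complex (x0 + A) R)"
      using Sne by (auto simp: frontier_def S_def closure_box interior_open[OF open_box])
    have ims: "\<bar>Im z\<bar> \<le> R" and res: "\<bar>Re z - x0\<bar> \<le> A" using zc unfolding mem_cbox_cplx by auto
    have "norm (G z) = norm (F z) * exp (- e * ((Re z - x0)^2 - (Im z)^2))"
      unfolding G_def norm_mult norm_exp_sq ..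
    also have "\<dots> \<le> (C + e) * exp (e * R\<^sup>2)"
    proof (cases "\<bar>Im z\<bar> = R")
      case True
      then have "Im z = R \<or> Im z = -R" by (cases "Im z \<ge> 0") auto
      then have "z = Complex (Re z) R \<or> z = Complex (Re z) (-R)"
        by (auto simp: complex_eq_iff)
      then have "norm (F z) \<le> C" using bdry by metis
      moreover have "exp (- e * ((Re z - x0)^2 - (Im z)^2)) \<le> exp (e * R\<^sup>2)"
      proof -
        have i2: "(Im z)^2 = R^2" using True by (metis power2_abs)
        have "- e * ((Re z - x0)^2 - (Im z)^2) \<le> e * R\<^sup>2"
          unfolding i2 using mult_nonneg_nonneg[of e "(Re z - x0)^2"] e by (simp add: algebra_simps)
        then show ?thesis by simp
      qed
      ultimately show ?thesis
        using C0 e by (intro mult_mono) auto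
    next
      case False
      have B0: "0 \<le> B" using bnd[OF ims] norm_ge_zero[of "F z"] by linarith
      have "\<bar>Re z - x0\<bar> = A" using False zc znb unfolding mem_cbox_cplx mem_box_cplx by auto
      then have "(Re z - x0)^2 = A^2" by (metis power2_abs)
      then have "norm (F z) * exp (- e * ((Re z - x0)^2 - (Im z)^2)) = norm (F z) * exp (- e * A^2) * exp (e * (Im z)^2)"
        by (simp add: exp_add[symmetric] algebra_simps)
      also have "\<dots> \<le> B * exp (- e * A^2) * exp (e * R^2)"
      proof (intro mult_mono)
        show "norm (F z) \<le> B" by (rule bnd[OF ims])
        show "exp (e * (Im z)\<^sup>2) \<le> exp (e * R\<^sup>2)"
        proof -
          have "\<bar>Im z\<bar>^2 \<le> R^2" by (rule power_mono[OF ims]) simp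
          then have "(Im z)^2 \<le> R^2" by simp
          then show ?thesis using e by (simp add: mult_left_mono)
        qed
      qed (use B0 in auto)
      also have "\<dots> \<le> (C + e) * exp (e * R\<^sup>2)"
        using A(2) C0 by (intro mult_right_mono) auto
      finally show ?thesis .
    qed
    finally show "norm (G z) \<le> (C + e) * exp (e * R\<^sup>2)" .
  qed
  moreover have "norm (G z0) \<ge> norm (F z0)"
  proof -
    have "norm (G z0) = norm (F z0) * exp (- e * ((Re z0 - x0)^2 - (Im z0)^2))"
      unfolding G_def norm_mult norm_exp_sq ..
    also have "\<dots> = norm (F z0) * exp (e * (Im z0)^2)" by (simp add: x0_def)
    also have "\<dots> \<ge> norm (F z0)" using e by (simp add: mult_le_cancel_left1)
    finally show ?thesis .
  qed
  ultimately show ?thesis by linarith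
qed

lemma strip_bound:
  fixes F :: "complex \<Rightarrow> complex"
  assumes holo: "F holomorphic_on UNIV" and R: "R > 0"
    and bnd: "\<And>z. \<bar>Im z\<bar> \<le> R \<Longrightarrow> norm (F z) \<le> B"
    and bdry: "\<And>x. norm (F (Complex x R)) \<le> C" "\<And>x. norm (F (Complex x (-R))) \<le> C"
    and z0: "\<bar>Im z0\<bar> \<le> R"
  shows "norm (F z0) \<le> C"
proof (cases "\<bar>Im z0\<bar> = R")
  case True
  then have "Im z0 = R \<or> Im z0 = -R" by (cases "Im z0 \<ge> 0") auto
  then have "z0 = Complex (Re z0) R \<or> z0 = Complex (Re z0) (-R)"
    by (auto simp: complex_eq_iff)
  then show ?thesis using bdry by metis
next
  case False
  then have z0': "\<bar>Im z0\<bar> < R" using z0 by simp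
  have lim: "((\<lambda>e. (C + e) * exp (e * R\<^sup>2)) \<longlongrightarrow> (C + 0) * exp (0 * R\<^sup>2)) (at_right 0)"
    by (intro tendsto_intros) 
  have ev: "eventually (\<lambda>e. norm (F z0) \<le> (C + e) * exp (e * R\<^sup>2)) (at_right (0::real))"
    unfolding eventually_at_right_field
    by (intro exI[of _ 1]) (auto intro!: strip_bound_eps[OF holo R bnd bdry z0'])
  have "norm (F z0) \<le> (C + 0) * exp (0 * R\<^sup>2)"
    by (rule tendsto_lowerbound[OF lim ev]) simp
  then show ?thesis by simp
qed

lemma ae_zero_of_boxes:
  fixes \<rho> :: "'a::euclidean_space \<Rightarrow> real"
  assumes [measurable]: "\<rho> \<in> borel_measurable borel" and int: "integrable lborel \<rho>"
    and box0: "\<And>a b. (LINT t|lborel. \<rho> t * indicator (box a b) t) = 0"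
  shows "AE t in lborel. \<rho> t = 0"
proof -
  define P where "P = (\<lambda>t. ennreal (max 0 (\<rho> t)))"
  define Q where "Q = (\<lambda>t. ennreal (max 0 (- \<rho> t)))"
  have [measurable]: "P \<in> borel_measurable borel" "Q \<in> borel_measurable borel"
    unfolding P_def Q_def by measurable
  have intP: "integrable lborel (\<lambda>t. max 0 (\<rho> t))" using int by (intro integrable_max) auto
  have intQ: "integrable lborel (\<lambda>t. max 0 (- \<rho> t))" using int by (intro integrable_max) auto
  have boxeq: "emeasure (density lborel P) X = emeasure (density lborel Q) X"
    if X: "X = box a b" for X a b
  proof -
    have [measurable]: "X \<in> sets borel" using X by simp
    have i1: "integrable lborel (\<lambda>t. max 0 (\<rho> t) * indicator X t)"
      using integrable_real_mult_indicator[OF _ intP, of X] by simp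
    have i2: "integrable lborel (\<lambda>t. max 0 (- \<rho> t) * indicator X t)"
      using integrable_real_mult_indicator[OF _ intQ, of X] by simp
    have "emeasure (density lborel P) X = (\<integral>\<^sup>+t. P t * indicator X t \<partial>lborel)"
      by (rule emeasure_density) auto
    also have "\<dots> = (\<integral>\<^sup>+t. ennreal (max 0 (\<rho> t) * indicator X t) \<partial>lborel)"
      unfolding P_def by (intro nn_integral_cong) (auto simp: indicator_def)
    also have "\<dots> = ennreal (LINT t|lborel. max 0 (\<rho> t) * indicator X t)"
      by (rule nn_integral_eq_integral[OF i1]) (auto simp: indicator_def)
    also have "(LINT t|lborel. max 0 (\<rho> t) * indicator X t) = (LINT t|lborel. max 0 (- \<rho> t) * indicator X t)"
    proof -
      have "(LINT t|lborel. max 0 (\<rho> t) * indicator X t) - (LINT t|lborel. max 0 (- \<rho> t) * indicator X t)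
          = (LINT t|lborel. max 0 (\<rho> t) * indicator X t - max 0 (- \<rho> t) * indicator X t)"
        using i1 i2 by (rule Bochner_Integration.integral_diff[symmetric])
      also have "\<dots> = (LINT t|lborel. \<rho> t * indicator X t)"
        by (intro Bochner_Integration.integral_cong) (auto simp: indicator_def max_def)
      also have "\<dots> = 0" using box0 X by simp
      finally show ?thesis by simp
    qed
    also have "ennreal (LINT t|lborel. max 0 (- \<rho> t) * indicator X t) = (\<integral>\<^sup>+t. ennreal (max 0 (- \<rho> t) * indicator X t) \<partial>lborel)"
      by (rule nn_integral_eq_integral[OF i2, symmetric]) (auto simp: indicator_def)
    also have "\<dots> = (\<integral>\<^sup>+t. Q t * indicator X t \<partial>lborel)"
      unfolding Q_def by (intro nn_integral_cong) (auto simp: indicator_def)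
    also have "\<dots> = emeasure (density lborel Q) X"
      by (rule emeasure_density[symmetric]) auto
    finally show ?thesis .
  qed
  have "density lborel P = density lborel Q"
  proof (rule measure_eqI_generator_eq[where E = "range (\<lambda>(a, b). box a b::'a set)" and \<Omega> = UNIV
        and A = "\<lambda>n::nat. box (- (real n *\<^sub>R One)) (real n *\<^sub>R One)"])
    show "Int_stable (range (\<lambda>(a, b). box a b::'a set))"
      by (auto simp: Int_stable_def box_Int_box)
    show "range (\<lambda>(a, b). box a b::'a set) \<subseteq> Pow UNIV" by simp
    show "sets (density lborel P) = sigma_sets UNIV (range (\<lambda>(a, b). box a b::'a set))"
      by (simp add: borel_eq_box)
    show "sets (density lborel Q) = sigma_sets UNIV (range (\<lambda>(a, b). box a b::'a set))"
      by (simp add: borel_eq_box)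
    show "range (\<lambda>n::nat. box (- (real n *\<^sub>R One)) (real n *\<^sub>R One)) \<subseteq> range (\<lambda>(a, b). box a b::'a set)"
      by auto
    show "(\<Union>n::nat. box (- (real n *\<^sub>R One)) (real n *\<^sub>R One)) = (UNIV::'a set)"
      by (rule UN_box_eq_UNIV)
    show "emeasure (density lborel P) (box (- (real n *\<^sub>R One)) (real n *\<^sub>R One)) \<noteq> \<infinity>" for n
    proof -
      have "emeasure (density lborel P) (box (- (real n *\<^sub>R One)) (real n *\<^sub>R One)) \<le> emeasure (density lborel P) UNIV"
        by (intro emeasure_mono) auto
      also have "\<dots> = (\<integral>\<^sup>+t. P t \<partial>lborel)" by (simp add: emeasure_density)
      also have "\<dots> = ennreal (LINT t|lborel. max 0 (\<rho> t))"
        unfolding P_def by (rule nn_integral_eq_integral[OF intP]) auto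
      also have "\<dots> < \<infinity>" by simp
      finally show ?thesis by simp
    qed
  next
    fix X assume "X \<in> range (\<lambda>(a, b). box a b::'a set)"
    then obtain a b where "X = box a b" by auto
    then show "emeasure (density lborel P) X = emeasure (density lborel Q) X" by (rule boxeq)
  qed
  then have "AE t in lborel. P t = Q t"
    by (intro sigma_finite_measure.density_unique[OF sigma_finite_lborel]) auto
  then show ?thesis
  proof eventually_elim
    fix t assume "P t = Q t"
    then have "max 0 (\<rho> t) = max 0 (- \<rho> t)" unfolding P_def Q_def by (simp add: ennreal_inj)
    then show "\<rho> t = 0" by (auto simp: max_def split: if_splits)
  qed
qed

lemma ae_zero_of_boxes_complex:
  fixes \<psi> :: "'a::euclidean_space \<Rightarrow> complex"
  assumes [measurable]: "\<psi> \<in> borel_measurable borel" and int: "integrable lborel \<psi>"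
    and box0: "\<And>a b. (LINT t|lborel. \<psi> t * indicator (box a b) t) = 0"
  shows "AE t in lborel. \<psi> t = 0"
proof -
  have ii: "integrable lborel (\<lambda>t. \<psi> t * indicator (box a b) t)" for a b
    by (rule Bochner_Integration.integrable_bound[OF int]) (auto simp: indicator_def)
  have re: "AE t in lborel. Re (\<psi> t) = 0"
  proof (rule ae_zero_of_boxes)
    show "integrable lborel (\<lambda>t. Re (\<psi> t))" using int by (rule integrable_bounded_linear[OF bounded_linear_Re])
    fix a b :: 'a
    have "(LINT t|lborel. Re (\<psi> t) * indicator (box a b) t) = (LINT t|lborel. Re (\<psi> t * indicator (box a b) t))"
      by (intro Bochner_Integration.integral_cong) (auto simp: indicator_def)
    also have "\<dots> = Re (LINT t|lborel. \<psi> t * indicator (box a b) t)"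
      by (rule integral_bounded_linear[OF bounded_linear_Re ii])
    finally show "(LINT t|lborel. Re (\<psi> t) * indicator (box a b) t) = 0" using box0 by simp
  qed measurable
  have im: "AE t in lborel. Im (\<psi> t) = 0"
  proof (rule ae_zero_of_boxes)
    show "integrable lborel (\<lambda>t. Im (\<psi> t))" using int by (rule integrable_bounded_linear[OF bounded_linear_Im])
    fix a b :: 'a
    have "(LINT t|lborel. Im (\<psi> t) * indicator (box a b) t) = (LINT t|lborel. Im (\<psi> t * indicator (box a b) t))"
      by (intro Bochner_Integration.integral_cong) (auto simp: indicator_def)
    also have "\<dots> = Im (LINT t|lborel. \<psi> t * indicator (box a b) t)"
      by (rule integral_bounded_linear[OF bounded_linear_Im ii])
    finally show "(LINT t|lborel. Im (\<psi> t) * indicator (box a b) t) = 0" using box0 by simp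
  qed measurable
  from re im show ?thesis by eventually_elim (simp add: complex_eq_iff)
qed

lemma gauss_int_integrable:
  assumes "\<alpha> > 0"
  shows "integrable lborel (\<lambda>t::'a::euclidean_space. exp (- pi * \<alpha> * norm t ^ 2))"
  using gauss_integrable[of "pi * \<alpha>", where 'a='a] assms by (simp add: mult.assoc)

lemma gauss_int_pos:
  assumes a: "\<alpha> > 0"
  shows "(LINT t|lborel. exp (- pi * \<alpha> * norm (t::'a::euclidean_space) ^ 2)) > 0"
proof -
  have int: "integrable lborel (\<lambda>t::'a. exp (- pi * \<alpha> * norm t ^ 2))" by (rule gauss_int_integrable[OF a])
  have ge: "(LINT t|lborel. exp (- pi * \<alpha> * norm (t::'a) ^ 2)) \<ge> 0" by (intro integral_nonneg_AE) auto
  have "(LINT t|lborel. exp (- pi * \<alpha> * norm (t::'a) ^ 2)) \<noteq> 0"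
  proof
    assume "(LINT t|lborel. exp (- pi * \<alpha> * norm (t::'a) ^ 2)) = 0"
    then have "AE t in lborel. exp (- pi * \<alpha> * norm (t::'a) ^ 2) = 0"
      using integral_nonneg_eq_0_iff_AE[OF int] by auto
    then have "AE t in (lborel::'a measure). False" by simp
    then have "ae_filter (lborel::'a measure) = bot" by (simp add: eventually_False)
    then show False using ae_filter_eq_bot_iff[of "lborel::'a measure"] by simp
  qed
  with ge show ?thesis by linarith
qed

lemma ft_zero_gauss_conv:
  fixes \<psi> :: "'a::euclidean_space \<Rightarrow> complex"
  assumes [measurable]: "\<psi> \<in> borel_measurable borel" and int: "integrable lborel \<psi>"
    and ft0: "\<And>y. (LINT t|lborel. \<psi> t * exp (\<i> * complex_of_real (t \<bullet> (2 * pi) *\<^sub>R y))) = 0"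
    and a: "\<alpha> > 0"
  shows "(LINT t|lborel. \<psi> t * complex_of_real (exp (- pi * norm (t - x) ^ 2 / \<alpha>))) = 0"
proof -
  have PS: "pair_sigma_finite (lborel::'a measure) (lborel::'a measure)"
    by (simp add: pair_sigma_finite_def sigma_finite_lborel)
  define g where "g = (\<lambda>u::'a. complex_of_real (exp (- pi * \<alpha> * norm u ^ 2)))"
  define I where "I = (LINT u|lborel. exp (- pi * \<alpha> * norm (u::'a) ^ 2))"
  have Ipos: "I > 0" unfolding I_def by (rule gauss_int_pos[OF a])
  have intg: "integrable lborel (\<lambda>u::'a. exp (- pi * \<alpha> * norm u ^ 2))" by (rule gauss_int_integrable[OF a])
  have gf: "(LINT u|lborel. g u * exp (\<i> * complex_of_real (u \<bullet> (2 * pi) *\<^sub>R y))) =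
      complex_of_real I * complex_of_real (exp (- pi * norm y ^ 2 / \<alpha>))" for y
    using gauss_ft[OF a, of y] unfolding g_def I_def by simp
  define f where "f = (\<lambda>t u. \<psi> t * (g u * exp (\<i> * complex_of_real (u \<bullet> (2 * pi) *\<^sub>R (t - x)))))"
  have [measurable]: "g \<in> borel_measurable borel" unfolding g_def by measurable
  have fm[measurable]: "case_prod f \<in> borel_measurable (lborel \<Otimes>\<^sub>M lborel)"
    unfolding f_def by measurable
  have nf: "norm (f t u) = norm (\<psi> t) * exp (- pi * \<alpha> * norm u ^ 2)" for t u
    unfolding f_def g_def by (simp add: norm_mult)
  have intf: "integrable (lborel \<Otimes>\<^sub>M lborel) (case_prod f)"
  proof (rule pair_sigma_finite.Fubini_integrable[OF PS])
    have eq: "(\<lambda>t. LINT u|lborel. norm (case_prod f (t, u))) = (\<lambda>t. norm (\<psi> t) * I)"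
      by (simp add: nf I_def)
    show "integrable lborel (\<lambda>t. LINT u|lborel. norm (case_prod f (t, u)))"
      unfolding eq using int by (intro integrable_mult_left) auto
    show "AE t in lborel. integrable lborel (\<lambda>u. case_prod f (t, u))"
    proof (intro AE_I2)
      fix t
      show "integrable lborel (\<lambda>u. case_prod f (t, u))"
      proof (rule Bochner_Integration.integrable_bound)
        show "integrable lborel (\<lambda>u::'a. norm (\<psi> t) * exp (- pi * \<alpha> * norm u ^ 2))"
          using intg by (rule integrable_mult_right)
      qed (auto simp: nf)
    qed
  qed fact
  have "(LINT u|lborel. LINT t|lborel. f t u) = (LINT t|lborel. LINT u|lborel. f t u)"
    by (rule pair_sigma_finite.Fubini_integral[OF PS intf])
  moreover have "(LINT t|lborel. f t u) = 0" for u
  proof -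
    have pt: "f t u = (g u * exp (- (\<i> * complex_of_real (u \<bullet> (2 * pi) *\<^sub>R x)))) *
        (\<psi> t * exp (\<i> * complex_of_real (t \<bullet> (2 * pi) *\<^sub>R u)))" for t
    proof -
      have "u \<bullet> (2 * pi) *\<^sub>R (t - x) = t \<bullet> (2 * pi) *\<^sub>R u - u \<bullet> (2 * pi) *\<^sub>R x"
        by (simp add: inner_diff_right inner_commute right_diff_distrib)
      then have "\<i> * complex_of_real (u \<bullet> (2 * pi) *\<^sub>R (t - x))
          = \<i> * complex_of_real (t \<bullet> (2 * pi) *\<^sub>R u) + - (\<i> * complex_of_real (u \<bullet> (2 * pi) *\<^sub>R x))"
        by (simp add: algebra_simps)
      then show ?thesis unfolding f_def by (simp only: exp_add) (simp add: mult_ac)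
    qed
    have "(LINT t|lborel. f t u) = (g u * exp (- (\<i> * complex_of_real (u \<bullet> (2 * pi) *\<^sub>R x)))) *
        (LINT t|lborel. \<psi> t * exp (\<i> * complex_of_real (t \<bullet> (2 * pi) *\<^sub>R u)))"
      unfolding pt by (rule integral_mult_right_zero)
    also have "\<dots> = 0" using ft0 by simp
    finally show ?thesis .
  qed
  moreover have "(LINT u|lborel. f t u) = complex_of_real I * (\<psi> t * complex_of_real (exp (- pi * norm (t - x) ^ 2 / \<alpha>)))" for t
  proof -
    have "(LINT u|lborel. f t u) = \<psi> t * (LINT u|lborel. g u * exp (\<i> * complex_of_real (u \<bullet> (2 * pi) *\<^sub>R (t - x))))"
      unfolding f_def by (rule integral_mult_right_zero)
    also have "\<dots> = complex_of_real I * (\<psi> t * complex_of_real (exp (- pi * norm (t - x) ^ 2 / \<alpha>)))"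
      by (subst gf) (simp add: mult_ac)
    finally show ?thesis .
  qed
  ultimately have "0 = (LINT t|lborel. complex_of_real I * (\<psi> t * complex_of_real (exp (- pi * norm (t - x) ^ 2 / \<alpha>))))"
    by simp
  also have "\<dots> = complex_of_real I * (LINT t|lborel. \<psi> t * complex_of_real (exp (- pi * norm (t - x) ^ 2 / \<alpha>)))"
    by (rule integral_mult_right_zero)
  finally show ?thesis using Ipos by simp
qed

lemma pair_sigma_finite_lborel: "pair_sigma_finite (lborel::'a::euclidean_space measure) (lborel::'a measure)"
  by (simp add: pair_sigma_finite_def sigma_finite_lborel)

lemma integrable_prod_mult:
  fixes f g :: "'a::euclidean_space \<Rightarrow> real"
  assumes [measurable]: "f \<in> borel_measurable borel" "g \<in> borel_measurable borel"
    and intf: "integrable lborel f" and intg: "integrable lborel g"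
  shows "integrable (lborel \<Otimes>\<^sub>M lborel) (\<lambda>(t, x). f t * g x)"
proof (rule pair_sigma_finite.Fubini_integrable[OF pair_sigma_finite_lborel])
  show "(\<lambda>(t, x). f t * g x) \<in> borel_measurable (lborel \<Otimes>\<^sub>M lborel)" by measurable
  have eq: "(\<lambda>t. LINT x|lborel. norm (case_prod (\<lambda>t x. f t * g x) (t, x))) = (\<lambda>t. \<bar>f t\<bar> * (LINT x|lborel. \<bar>g x\<bar>))"
    by (simp add: abs_mult)
  show "integrable lborel (\<lambda>t. LINT x|lborel. norm (case_prod (\<lambda>t x. f t * g x) (t, x)))"
    unfolding eq using intf by (intro integrable_mult_left) auto
  show "AE t in lborel. integrable lborel (\<lambda>x. case_prod (\<lambda>t x. f t * g x) (t, x))"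
    using intg by (intro AE_I2) (simp add: integrable_mult_right)
qed

lemma box_frontier_null: "AE t in lborel. t \<notin> cbox a b - box (a::'a::euclidean_space) b"
proof -
  have "cbox a b - box a b \<in> null_sets lebesgue"
    using negligible_frontier_interval[of a b] by (simp add: negligible_iff_null_sets)
  then have "cbox a b - box a b \<in> null_sets lborel"
    by (subst null_sets_completion_iff[symmetric]) auto
  then show ?thesis by (rule AE_not_in)
qed

lemma gauss_conv_zero_box_step:
  fixes \<psi> :: "'a::euclidean_space \<Rightarrow> complex"
  assumes [measurable]: "\<psi> \<in> borel_measurable borel" and int: "integrable lborel \<psi>"
    and conv0: "\<And>x. (LINT t|lborel. \<psi> t * complex_of_real (exp (- pi * norm (t - x) ^ 2 / \<alpha>))) = 0"
    and a: "\<alpha> > 0"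
  shows "(LINT t|lborel. \<psi> t * complex_of_real (LINT y|lborel. indicator (box a b) (t + sqrt \<alpha> *\<^sub>R y) * exp (- pi * norm y ^ 2))) = 0"
proof -
  define B where "B = box a b"
  have [measurable]: "B \<in> sets borel" unfolding B_def by simp
  define k where "k = (\<lambda>t. LINT x|lborel. indicator B x * exp (- pi * norm (t - x) ^ 2 / \<alpha>))"
  define h where "h = (\<lambda>t x. \<psi> t * complex_of_real (indicator B x * exp (- pi * norm (t - x) ^ 2 / \<alpha>)))"
  have intB: "integrable lborel (indicator B :: 'a \<Rightarrow> real)"
    unfolding B_def using emeasure_lborel_box_finite[of a b] by (simp add: integrable_indicator_iff)
  have inth: "integrable (lborel \<Otimes>\<^sub>M lborel) (case_prod h)"
  proof (rule Bochner_Integration.integrable_bound)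
    show "integrable (lborel \<Otimes>\<^sub>M lborel) (\<lambda>(t, x). norm (\<psi> t) * indicator B x)"
      using int intB by (intro integrable_prod_mult) auto
    show "case_prod h \<in> borel_measurable (lborel \<Otimes>\<^sub>M lborel)" unfolding h_def by measurable
    show "AE tx in lborel \<Otimes>\<^sub>M lborel. norm (case_prod h tx) \<le> norm ((\<lambda>(t, x). norm (\<psi> t) * indicator B x) tx)"
      using a by (intro AE_I2) (auto simp: h_def norm_mult indicator_def intro!: mult_left_le)
  qed
  have "(LINT x|lborel. LINT t|lborel. h t x) = (LINT t|lborel. LINT x|lborel. h t x)"
    by (rule pair_sigma_finite.Fubini_integral[OF pair_sigma_finite_lborel inth])
  moreover have "(LINT t|lborel. h t x) = 0" for x
  proof -
    have "(LINT t|lborel. h t x) = complex_of_real (indicator B x) * (LINT t|lborel. \<psi> t * complex_of_real (exp (- pi * norm (t - x) ^ 2 / \<alpha>)))"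
      unfolding h_def by (subst integral_mult_right_zero[symmetric]) (simp add: mult_ac)
    then show ?thesis using conv0 by simp
  qed
  moreover have "(LINT x|lborel. h t x) = \<psi> t * complex_of_real (k t)" for t
    unfolding h_def k_def by (simp only: integral_mult_right_zero integral_complex_of_real)
  ultimately have k0: "(LINT t|lborel. \<psi> t * complex_of_real (k t)) = 0" by simp
  have kscale: "k t = sqrt \<alpha> ^ DIM('a) * (LINT y|lborel. indicator B (t + sqrt \<alpha> *\<^sub>R y) * exp (- pi * norm y ^ 2))" for t
  proof -
    have "k t = \<bar>sqrt \<alpha>\<bar> ^ DIM('a) *\<^sub>R (LINT y|lborel. indicator B (t + sqrt \<alpha> *\<^sub>R y) * exp (- pi * norm (t - (t + sqrt \<alpha> *\<^sub>R y)) ^ 2 / \<alpha>))"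
      unfolding k_def by (rule lborel_integral_scale) (use a in auto)
    also have "(\<lambda>y. indicator B (t + sqrt \<alpha> *\<^sub>R y) * exp (- pi * norm (t - (t + sqrt \<alpha> *\<^sub>R y)) ^ 2 / \<alpha>))
        = (\<lambda>y. indicator B (t + sqrt \<alpha> *\<^sub>R y) * exp (- pi * norm y ^ 2))"
      using a by (auto simp: power_mult_distrib)
    finally show ?thesis using a by simp
  qed
  have "(LINT t|lborel. \<psi> t * complex_of_real (k t))
      = complex_of_real (sqrt \<alpha> ^ DIM('a)) * (LINT t|lborel. \<psi> t * complex_of_real (LINT y|lborel. indicator B (t + sqrt \<alpha> *\<^sub>R y) * exp (- pi * norm y ^ 2)))"
    unfolding kscale by (subst integral_mult_right_zero[symmetric]) (simp add: mult_ac)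
  with k0 a show ?thesis unfolding B_def by simp
qed

lemma sqrt_inv_suc_lim: "(\<lambda>n. sqrt (1 / real (Suc n))) \<longlonglongrightarrow> 0"
  by real_asymp

lemma gauss_conv_zero_box:
  fixes \<psi> :: "'a::euclidean_space \<Rightarrow> complex"
  assumes [measurable]: "\<psi> \<in> borel_measurable borel" and int: "integrable lborel \<psi>"
    and conv0: "\<And>x \<alpha>. \<alpha> > 0 \<Longrightarrow> (LINT t|lborel. \<psi> t * complex_of_real (exp (- pi * norm (t - x) ^ 2 / \<alpha>))) = 0"
  shows "(LINT t|lborel. \<psi> t * indicator (box a b) t) = 0"
proof -
  define B where "B = box a b"
  have [measurable]: "B \<in> sets borel" unfolding B_def by simp
  define gs where "gs = (\<lambda>y::'a. exp (- pi * norm y ^ 2))"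
  have [measurable]: "gs \<in> borel_measurable borel" unfolding gs_def by measurable
  have intgs: "integrable lborel gs" unfolding gs_def using gauss_int_integrable[of 1, where 'a='a] by simp
  define I1 where "I1 = (LINT y|lborel. gs y)"
  have I1pos: "I1 > 0" unfolding I1_def gs_def using gauss_int_pos[of 1, where 'a='a] by simp
  define s where "s = (\<lambda>n::nat. sqrt (1 / real (Suc n)))"
  define m where "m = (\<lambda>n t. LINT y|lborel. indicator B (t + s n *\<^sub>R y) * gs y)"
  have z: "(LINT t|lborel. \<psi> t * complex_of_real (m n t)) = 0" for n
    unfolding m_def s_def gs_def B_def
    by (rule gauss_conv_zero_box_step[OF assms(1) int conv0]) auto
  have intm: "integrable lborel (\<lambda>y. indicator B (t + c *\<^sub>R y) * gs y)" for t c
    by (rule Bochner_Integration.integrable_bound[OF intgs]) (auto simp: indicator_def gs_def)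
  have mbound: "norm (m n t) \<le> I1" for n t
  proof -
    have "0 \<le> m n t" unfolding m_def by (intro integral_nonneg_AE) (auto simp: gs_def)
    moreover have "m n t \<le> I1" unfolding m_def I1_def
      by (intro integral_mono intm intgs) (auto simp: indicator_def gs_def)
    ultimately show ?thesis by simp
  qed
  have mlim: "(\<lambda>n. m n t) \<longlonglongrightarrow> indicator B t * I1" if t: "t \<notin> cbox a b - box a b" for t
  proof -
    have stend: "(\<lambda>n. t + s n *\<^sub>R y) \<longlonglongrightarrow> t" for y
    proof -
      have "(\<lambda>n. t + s n *\<^sub>R y) \<longlonglongrightarrow> t + 0 *\<^sub>R y"
        unfolding s_def by (intro tendsto_intros sqrt_inv_suc_lim)
      then show ?thesis by simp
    qed
    have pw: "(\<lambda>n. indicator B (t + s n *\<^sub>R y) * gs y) \<longlonglongrightarrow> indicator B t * gs y" for y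
    proof (cases "t \<in> B")
      case True
      have "eventually (\<lambda>n. t + s n *\<^sub>R y \<in> B) sequentially"
        using topological_tendstoD[OF stend[of y], of B] True unfolding B_def by auto
      then have "eventually (\<lambda>n. indicator B (t + s n *\<^sub>R y) * gs y = indicator B t * gs y) sequentially"
        by eventually_elim (use True in auto)
      then show ?thesis by (rule tendsto_eventually)
    next
      case False
      then have "t \<in> - cbox a b" using t unfolding B_def by auto
      then have "eventually (\<lambda>n. t + s n *\<^sub>R y \<in> - cbox a b) sequentially"
        using topological_tendstoD[OF stend[of y], of "- cbox a b"] by (auto simp: open_Compl)
      then have "eventually (\<lambda>n. indicator B (t + s n *\<^sub>R y) * gs y = indicator B t * gs y) sequentially"
        by eventually_elim (use False box_subset_cbox in \<open>auto simp: B_def indicator_def\<close>)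
      then show ?thesis by (rule tendsto_eventually)
    qed
    have "(\<lambda>n. m n t) \<longlonglongrightarrow> (LINT y|lborel. indicator B t * gs y)"
      unfolding m_def
    proof (rule integral_dominated_convergence[where w = gs])
      show "AE y in lborel. (\<lambda>n. indicator B (t + s n *\<^sub>R y) * gs y) \<longlonglongrightarrow> indicator B t * gs y"
        using pw by simp
      show "AE y in lborel. norm (indicator B (t + s n *\<^sub>R y) * gs y) \<le> gs y" for n
        by (intro AE_I2) (auto simp: indicator_def gs_def)
    qed (use intgs in auto)
    also have "(LINT y|lborel. indicator B t * gs y) = indicator B t * I1"
      unfolding I1_def by simp
    finally show ?thesis .
  qed
  have "(\<lambda>n. LINT t|lborel. \<psi> t * complex_of_real (m n t)) \<longlonglongrightarrow> (LINT t|lborel. \<psi> t * complex_of_real (indicator B t * I1))"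
  proof (rule integral_dominated_convergence[where w = "\<lambda>t. norm (\<psi> t) * I1"])
    show "integrable lborel (\<lambda>t. norm (\<psi> t) * I1)" using int by (intro integrable_mult_left) auto
    show "AE t in lborel. (\<lambda>n. \<psi> t * complex_of_real (m n t)) \<longlonglongrightarrow> \<psi> t * complex_of_real (indicator B t * I1)"
      using box_frontier_null[of a b]
    proof eventually_elim
      case (elim t)
      show ?case by (intro tendsto_intros mlim elim)
    qed
    show "AE t in lborel. norm (\<psi> t * complex_of_real (m n t)) \<le> norm (\<psi> t) * I1" for n
      using mbound[of n] by (intro AE_I2) (auto simp: norm_mult intro!: mult_left_mono)
  qed (auto simp: m_def)
  then have "(LINT t|lborel. \<psi> t * complex_of_real (indicator B t * I1)) = 0"
    unfolding z by (simp add: LIMSEQ_const_iff)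
  moreover have "(LINT t|lborel. \<psi> t * complex_of_real (indicator B t * I1)) = complex_of_real I1 * (LINT t|lborel. \<psi> t * indicator B t)"
  proof -
    have "(\<lambda>t. \<psi> t * complex_of_real (indicator B t * I1)) = (\<lambda>t. complex_of_real I1 * (\<psi> t * indicator B t))"
      by (auto simp: indicator_def fun_eq_iff)
    then show ?thesis by (simp only: integral_mult_right_zero)
  qed
  ultimately show ?thesis using I1pos unfolding B_def by simp
qed

lemma fourier_unique:
  fixes \<psi> :: "'a::euclidean_space \<Rightarrow> complex"
  assumes [measurable]: "\<psi> \<in> borel_measurable borel" and int: "integrable lborel \<psi>"
    and ft0: "\<And>y. (LINT t|lborel. \<psi> t * exp (\<i> * complex_of_real (t \<bullet> (2 * pi) *\<^sub>R y))) = 0"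
  shows "AE t in lborel. \<psi> t = 0"
proof (rule ae_zero_of_boxes_complex[OF assms(1) int])
  fix a b :: 'a
  show "(LINT t|lborel. \<psi> t * indicator (box a b) t) = 0"
    by (rule gauss_conv_zero_box[OF assms(1) int ft_zero_gauss_conv[OF assms]])
qed

lemma borel_version:
  fixes f :: "'a::euclidean_space \<Rightarrow> complex"
  assumes "f \<in> borel_measurable lebesgue"
  obtains f' where "f' \<in> borel_measurable borel" "AE t in lborel. f t = f' t"
proof -
  have "(\<lambda>t. Re (f t)) \<in> borel_measurable (completion lborel)" using assms by measurable
  from completion_ex_borel_measurable_real[OF this]
  obtain r where r: "r \<in> borel_measurable lborel" "AE t in lborel. Re (f t) = r t" by blast
  have "(\<lambda>t. Im (f t)) \<in> borel_measurable (completion lborel)" using assms by measurable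
  from completion_ex_borel_measurable_real[OF this]
  obtain i where i: "i \<in> borel_measurable lborel" "AE t in lborel. Im (f t) = i t" by blast
  show ?thesis
  proof
    show "(\<lambda>t. Complex (r t) (i t)) \<in> borel_measurable borel"
      using r(1) i(1) by (simp add: measurable_lborel1 borel_measurable_complex_iff)
    show "AE t in lborel. f t = Complex (r t) (i t)"
      using r(2) i(2) by eventually_elim (simp add: complex_eq_iff)
  qed
qed

lemma kernel_identity:
  fixes u t :: "'a::euclidean_space" and a b :: real
  assumes u: "norm u = 1"
  shows "exp (- complex_of_real pi * (Complex a b)\<^sup>2) * (complex_of_real (exp (- pi * norm t ^ 2)) * exp (Complex a b * complex_of_real (t \<bullet> (2 * pi) *\<^sub>R u)))
    = complex_of_real (exp (pi * b\<^sup>2)) * exp (- (\<i> * complex_of_real (2 * pi * a * b))) *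
      (exp (- (complex_of_real (2 * pi) * \<i> * complex_of_real (t \<bullet> (- b) *\<^sub>R u))) * complex_of_real (exp (- pi * norm (t - a *\<^sub>R u) ^ 2)))"
proof -
  have e1: "exp (- complex_of_real pi * (Complex a b)\<^sup>2) * (complex_of_real (exp (- pi * norm t ^ 2)) * exp (Complex a b * complex_of_real (t \<bullet> (2 * pi) *\<^sub>R u)))
      = exp (- complex_of_real pi * (Complex a b)\<^sup>2 + complex_of_real (- pi * norm t ^ 2) + Complex a b * complex_of_real (t \<bullet> (2 * pi) *\<^sub>R u))"
    by (simp only: exp_add exp_of_real mult.assoc)
  have e2: "complex_of_real (exp (pi * b\<^sup>2)) * exp (- (\<i> * complex_of_real (2 * pi * a * b))) *
      (exp (- (complex_of_real (2 * pi) * \<i> * complex_of_real (t \<bullet> (- b) *\<^sub>R u))) * complex_of_real (exp (- pi * norm (t - a *\<^sub>R u) ^ 2)))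
    = exp (complex_of_real (pi * b\<^sup>2) + - (\<i> * complex_of_real (2 * pi * a * b)) +
       - (complex_of_real (2 * pi) * \<i> * complex_of_real (t \<bullet> (- b) *\<^sub>R u)) + complex_of_real (- pi * norm (t - a *\<^sub>R u) ^ 2))"
    by (simp only: exp_add exp_of_real mult.assoc)
  have n: "norm (t - a *\<^sub>R u) ^ 2 = norm t ^ 2 - 2 * a * (t \<bullet> u) + a\<^sup>2"
  proof -
    have "norm (t - a *\<^sub>R u) ^ 2 = (t - a *\<^sub>R u) \<bullet> (t - a *\<^sub>R u)" by (simp add: power2_norm_eq_inner)
    also have "\<dots> = t \<bullet> t - 2 * a * (t \<bullet> u) + a\<^sup>2 * (u \<bullet> u)"
      by (simp add: inner_diff_left inner_diff_right inner_commute power2_eq_square algebra_simps)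
    also have "u \<bullet> u = 1" using u by (simp add: norm_eq_sqrt_inner)
    finally show ?thesis by (simp add: power2_norm_eq_inner)
  qed
  have i1: "t \<bullet> (2 * pi) *\<^sub>R u = 2 * pi * (t \<bullet> u)" by simp
  have i2: "t \<bullet> (- b) *\<^sub>R u = - b * (t \<bullet> u)" by simp
  have "- complex_of_real pi * (Complex a b)\<^sup>2 + complex_of_real (- pi * norm t ^ 2) + Complex a b * complex_of_real (t \<bullet> (2 * pi) *\<^sub>R u)
      = complex_of_real (pi * b\<^sup>2) + - (\<i> * complex_of_real (2 * pi * a * b)) +
       - (complex_of_real (2 * pi) * \<i> * complex_of_real (t \<bullet> (- b) *\<^sub>R u)) + complex_of_real (- pi * norm (t - a *\<^sub>R u) ^ 2)"
    unfolding n i1 i2 by (simp add: complex_eq_iff power2_eq_square algebra_simps)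
  then show ?thesis unfolding e1 e2 by simp
qed

lemma amgm_half: "(x::real) * y \<le> (x\<^sup>2 + y\<^sup>2) / 2"
proof -
  have "0 \<le> (x - y)\<^sup>2" by simp
  then show ?thesis by (simp add: power2_eq_square algebra_simps)
qed

lemma const_integrable_zero:
  assumes "integrable lborel (\<lambda>_::'a::euclidean_space. (r::real))"
  shows "r = 0"
proof (rule ccontr)
  assume r: "r \<noteq> 0"
  from assms have "(\<integral>\<^sup>+x. ennreal (norm r) \<partial>(lborel::'a measure)) < \<infinity>"
    by (simp add: integrable_iff_bounded)
  moreover have "(\<integral>\<^sup>+x. ennreal (norm r) \<partial>(lborel::'a measure)) = ennreal (norm r) * emeasure (lborel::'a measure) UNIV"
    by (simp add: nn_integral_const)
  moreover have "ennreal (norm r) * emeasure (lborel::'a measure) UNIV = \<infinity>"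
    using r by (simp add: ennreal_mult_top)
  ultimately show False by simp
qed

context
  fixes f' :: "'a::euclidean_space \<Rightarrow> complex"
  assumes f'm[measurable]: "f' \<in> borel_measurable borel"
    and sq: "integrable lborel (\<lambda>t. norm (f' t) ^ 2)"
begin

definition "Sf x \<omega> = (LINT t|lborel. exp (- (complex_of_real (2 * pi) * \<i> * complex_of_real (t \<bullet> \<omega>))) * f' t * complex_of_real (exp (- pi * norm (t - x) ^ 2)))"
definition "phi t = f' t * complex_of_real (exp (- pi * norm t ^ 2))"
definition "hf u \<zeta> = exp (- complex_of_real pi * \<zeta>\<^sup>2) * (LINT t|lborel. phi t * exp (\<zeta> * complex_of_real (t \<bullet> (2 * pi) *\<^sub>R u)))"
definition "Af = (LINT t|lborel. norm (f' t) ^ 2)"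
definition "Jg = (LINT t|lborel. exp (- pi * 2 * norm (t::'a) ^ 2))"

lemma phi_measurable[measurable]: "phi \<in> borel_measurable borel"
  unfolding phi_def by measurable

lemma phi_expint: "expint phi"
proof (rule expint_I[where c = "pi / 2"])
  show "phi \<in> borel_measurable borel" by measurable
  show "0 < pi / 2" by simp
  show "integrable lborel (\<lambda>t. norm (phi t) * exp (pi / 2 * norm t ^ 2))"
  proof (rule Bochner_Integration.integrable_bound)
    show "integrable lborel (\<lambda>t. (norm (f' t) ^ 2 + exp (- pi * 1 * norm t ^ 2)) / 2)"
      using sq gauss_int_integrable[of 1, where 'a='a] by (intro integrable_divide Bochner_Integration.integrable_add) auto
    show "(\<lambda>t. norm (phi t) * exp (pi / 2 * norm t ^ 2)) \<in> borel_measurable lborel" by measurable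
    show "AE t in lborel. norm (norm (phi t) * exp (pi / 2 * norm t ^ 2)) \<le> norm ((norm (f' t) ^ 2 + exp (- pi * 1 * norm t ^ 2)) / 2)"
    proof (intro AE_I2)
      fix t :: 'a
      have e: "norm (phi t) * exp (pi / 2 * norm t ^ 2) = norm (f' t) * exp (- pi / 2 * norm t ^ 2)"
        by (simp add: phi_def norm_mult mult.assoc exp_add[symmetric])
      have e2: "(exp (- pi / 2 * norm t ^ 2))\<^sup>2 = exp (- pi * 1 * norm t ^ 2)"
        by (simp add: exp_double[symmetric] power2_eq_square exp_add[symmetric])
      have "norm (phi t) * exp (pi / 2 * norm t ^ 2) \<le> (norm (f' t) ^ 2 + exp (- pi * 1 * norm t ^ 2)) / 2"
        unfolding e e2[symmetric] by (rule amgm_half)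
      then show "norm (norm (phi t) * exp (pi / 2 * norm t ^ 2)) \<le> norm ((norm (f' t) ^ 2 + exp (- pi * 1 * norm t ^ 2)) / 2)"
        by simp
    qed
  qed
qed

lemma Sf_bound: "norm (Sf x \<omega>) \<le> (Af + Jg) / 2"
proof -
  have ig: "integrable lborel (\<lambda>t. exp (- pi * 2 * norm (t - x) ^ 2))"
  proof -
    have "integrable lborel (\<lambda>t::'a. exp (- pi * 2 * norm t ^ 2))" by (rule gauss_int_integrable) simp
    then have "integrable lborel (\<lambda>t::'a. exp (- pi * 2 * norm (- x + t) ^ 2))"
      by (subst lborel_integrable_shift[where g = "\<lambda>t. exp (- pi * 2 * norm t ^ 2)"]) auto
    then show ?thesis by simp
  qed
  have J: "(LINT t|lborel. exp (- pi * 2 * norm (t - x) ^ 2)) = Jg"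
  proof -
    have "(LINT t|lborel. exp (- pi * 2 * norm (- x + t) ^ 2)) = (LINT t|lborel. exp (- pi * 2 * norm (t::'a) ^ 2))"
      by (rule lborel_integral_shift) measurable
    then show ?thesis unfolding Jg_def by simp
  qed
  have "norm (Sf x \<omega>) \<le> (LINT t|lborel. norm (exp (- (complex_of_real (2 * pi) * \<i> * complex_of_real (t \<bullet> \<omega>))) * f' t * complex_of_real (exp (- pi * norm (t - x) ^ 2))))"
    unfolding Sf_def by (rule integral_norm_bound)
  also have "\<dots> \<le> (LINT t|lborel. (norm (f' t) ^ 2 + exp (- pi * 2 * norm (t - x) ^ 2)) / 2)"
  proof (rule integral_mono)
    show "integrable lborel (\<lambda>t. (norm (f' t) ^ 2 + exp (- pi * 2 * norm (t - x) ^ 2)) / 2)"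
      using sq ig by (intro integrable_divide Bochner_Integration.integrable_add) auto
    show "integrable lborel (\<lambda>t. norm (exp (- (complex_of_real (2 * pi) * \<i> * complex_of_real (t \<bullet> \<omega>))) * f' t * complex_of_real (exp (- pi * norm (t - x) ^ 2))))"
    proof (rule Bochner_Integration.integrable_bound)
      show "integrable lborel (\<lambda>t. (norm (f' t) ^ 2 + exp (- pi * 2 * norm (t - x) ^ 2)) / 2)"
        using sq ig by (intro integrable_divide Bochner_Integration.integrable_add) auto
      show "(\<lambda>t. norm (exp (- (complex_of_real (2 * pi) * \<i> * complex_of_real (t \<bullet> \<omega>))) * f' t * complex_of_real (exp (- pi * norm (t - x) ^ 2)))) \<in> borel_measurable lborel"
        by measurable
      show "AE t in lborel. norm (norm (exp (- (complex_of_real (2 * pi) * \<i> * complex_of_real (t \<bullet> \<omega>))) * f' t * complex_of_real (exp (- pi * norm (t - x) ^ 2)))) \<le> norm ((norm (f' t) ^ 2 + exp (- pi * 2 * norm (t - x) ^ 2)) / 2)"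
      proof (intro AE_I2)
        fix t
        have e2: "(exp (- pi * norm (t - x) ^ 2))\<^sup>2 = exp (- pi * 2 * norm (t - x) ^ 2)"
          by (simp add: power2_eq_square exp_add[symmetric])
        have "norm (exp (- (complex_of_real (2 * pi) * \<i> * complex_of_real (t \<bullet> \<omega>))) * f' t * complex_of_real (exp (- pi * norm (t - x) ^ 2)))
            = norm (f' t) * exp (- pi * norm (t - x) ^ 2)"
          by (simp add: norm_mult)
        also have "\<dots> \<le> (norm (f' t) ^ 2 + exp (- pi * 2 * norm (t - x) ^ 2)) / 2"
          unfolding e2[symmetric] by (rule amgm_half)
        finally show "norm (norm (exp (- (complex_of_real (2 * pi) * \<i> * complex_of_real (t \<bullet> \<omega>))) * f' t * complex_of_real (exp (- pi * norm (t - x) ^ 2)))) \<le> norm ((norm (f' t) ^ 2 + exp (- pi * 2 * norm (t - x) ^ 2)) / 2)"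
          by simp
      qed
    qed
    show "norm (exp (- (complex_of_real (2 * pi) * \<i> * complex_of_real (t \<bullet> \<omega>))) * f' t * complex_of_real (exp (- pi * norm (t - x) ^ 2)))
        \<le> (norm (f' t) ^ 2 + exp (- pi * 2 * norm (t - x) ^ 2)) / 2" for t
    proof -
      have e2: "(exp (- pi * norm (t - x) ^ 2))\<^sup>2 = exp (- pi * 2 * norm (t - x) ^ 2)"
        by (simp add: power2_eq_square exp_add[symmetric])
      have "norm (exp (- (complex_of_real (2 * pi) * \<i> * complex_of_real (t \<bullet> \<omega>))) * f' t * complex_of_real (exp (- pi * norm (t - x) ^ 2)))
          = norm (f' t) * exp (- pi * norm (t - x) ^ 2)"
        by (simp add: norm_mult)
      also have "\<dots> \<le> (norm (f' t) ^ 2 + exp (- pi * 2 * norm (t - x) ^ 2)) / 2"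
        unfolding e2[symmetric] by (rule amgm_half)
      finally show ?thesis .
    qed
  qed
  also have "\<dots> = (Af + Jg) / 2"
    using sq ig unfolding Af_def J[symmetric] by (simp add: Bochner_Integration.integral_add)
  finally show ?thesis .
qed

lemma hf_holomorphic: "hf u holomorphic_on UNIV"
  unfolding hf_def[abs_def] by (intro holomorphic_intros expint_holomorphic phi_expint)

lemma hf_Complex:
  assumes u: "norm u = 1"
  shows "hf u (Complex a b) = complex_of_real (exp (pi * b\<^sup>2)) * exp (- (\<i> * complex_of_real (2 * pi * a * b))) * Sf (a *\<^sub>R u) ((- b) *\<^sub>R u)"
proof -
  define K where "K = complex_of_real (exp (pi * b\<^sup>2)) * exp (- (\<i> * complex_of_real (2 * pi * a * b)))"
  have pt: "exp (- complex_of_real pi * (Complex a b)\<^sup>2) * (phi t * exp (Complex a b * complex_of_real (t \<bullet> (2 * pi) *\<^sub>R u)))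
      = K * (exp (- (complex_of_real (2 * pi) * \<i> * complex_of_real (t \<bullet> (- b) *\<^sub>R u))) * f' t * complex_of_real (exp (- pi * norm (t - a *\<^sub>R u) ^ 2)))" for t
  proof -
    have "exp (- complex_of_real pi * (Complex a b)\<^sup>2) * (phi t * exp (Complex a b * complex_of_real (t \<bullet> (2 * pi) *\<^sub>R u)))
        = f' t * (exp (- complex_of_real pi * (Complex a b)\<^sup>2) * (complex_of_real (exp (- pi * norm t ^ 2)) * exp (Complex a b * complex_of_real (t \<bullet> (2 * pi) *\<^sub>R u))))"
      unfolding phi_def by (simp only: ac_simps)
    also have "\<dots> = f' t * (K * (exp (- (complex_of_real (2 * pi) * \<i> * complex_of_real (t \<bullet> (- b) *\<^sub>R u))) * complex_of_real (exp (- pi * norm (t - a *\<^sub>R u) ^ 2))))"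
      unfolding kernel_identity[OF u] K_def ..
    also have "\<dots> = K * (exp (- (complex_of_real (2 * pi) * \<i> * complex_of_real (t \<bullet> (- b) *\<^sub>R u))) * f' t * complex_of_real (exp (- pi * norm (t - a *\<^sub>R u) ^ 2)))"
      by (simp only: ac_simps)
    finally show ?thesis .
  qed
  have "hf u (Complex a b) = (LINT t|lborel. exp (- complex_of_real pi * (Complex a b)\<^sup>2) * (phi t * exp (Complex a b * complex_of_real (t \<bullet> (2 * pi) *\<^sub>R u))))"
    unfolding hf_def by (rule integral_mult_right_zero[symmetric])
  also have "\<dots> = (LINT t|lborel. K * (exp (- (complex_of_real (2 * pi) * \<i> * complex_of_real (t \<bullet> (- b) *\<^sub>R u))) * f' t * complex_of_real (exp (- pi * norm (t - a *\<^sub>R u) ^ 2))))"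
    unfolding pt ..
  also have "\<dots> = K * Sf (a *\<^sub>R u) ((- b) *\<^sub>R u)"
    unfolding Sf_def by (rule integral_mult_right_zero)
  finally show ?thesis unfolding K_def .
qed

lemma norm_hf_Complex:
  assumes u: "norm u = 1"
  shows "norm (hf u (Complex a b)) = exp (pi * b\<^sup>2) * norm (Sf (a *\<^sub>R u) ((- b) *\<^sub>R u))"
  unfolding hf_Complex[OF u] by (simp add: norm_mult)

end

lemma main_borel:
  fixes f' :: "'a::euclidean_space \<Rightarrow> complex" and R N :: real
  assumes f'm[measurable]: "f' \<in> borel_measurable borel"
    and sq: "integrable lborel (\<lambda>t. norm (f' t) ^ 2)"
    and R: "R > 0" and N: "N > 1"
    and nz: "\<not> (AE t in lborel. f' t = 0)"
    and hyp: "\<And>x \<omega>. norm \<omega> = R \<Longrightarrow> norm (Sf f' x \<omega>) \<le> norm (LINT t|lborel. phi f' t) / N"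
  shows "N < exp (pi * R\<^sup>2)"
proof (rule ccontr)
  assume "\<not> N < exp (pi * R\<^sup>2)"
  then have NE: "exp (pi * R\<^sup>2) \<le> N" by simp
  define c where "c = (LINT t|lborel. phi f' t)"
  have hconst: "hf f' u z = c" if u: "norm u = 1" for u z
  proof -
    have holo: "hf f' u holomorphic_on UNIV" by (rule hf_holomorphic[OF f'm sq])
    have bnd: "norm (hf f' u z) \<le> exp (pi * R\<^sup>2) * ((Af f' + Jg TYPE('a)) / 2)" if "\<bar>Im z\<bar> \<le> R" for z
    proof -
      have "z = Complex (Re z) (Im z)" by simp
      then have "norm (hf f' u z) = exp (pi * (Im z)\<^sup>2) * norm (Sf f' (Re z *\<^sub>R u) ((- Im z) *\<^sub>R u))"
        using norm_hf_Complex[OF f'm sq u, of "Re z" "Im z"] by metis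
      also have "\<dots> \<le> exp (pi * R\<^sup>2) * ((Af f' + Jg TYPE('a)) / 2)"
      proof (intro mult_mono)
        have "\<bar>Im z\<bar>^2 \<le> R^2" by (rule power_mono[OF that]) simp
        then show "exp (pi * (Im z)\<^sup>2) \<le> exp (pi * R\<^sup>2)" by simp
        show "norm (Sf f' (Re z *\<^sub>R u) ((- Im z) *\<^sub>R u)) \<le> (Af f' + Jg TYPE('a)) / 2"
          by (rule Sf_bound[OF f'm sq])
      qed auto
      finally show ?thesis .
    qed
    have b1: "norm (hf f' u (Complex x R)) \<le> exp (pi * R\<^sup>2) * (norm c / N)" for x
    proof -
      have "norm (hf f' u (Complex x R)) = exp (pi * R\<^sup>2) * norm (Sf f' (x *\<^sub>R u) ((- R) *\<^sub>R u))"
        by (rule norm_hf_Complex[OF f'm sq u])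
      also have "\<dots> \<le> exp (pi * R\<^sup>2) * (norm c / N)"
        using hyp[of "(- R) *\<^sub>R u" "x *\<^sub>R u"] u R unfolding c_def by (intro mult_left_mono) auto
      finally show ?thesis .
    qed
    have b2: "norm (hf f' u (Complex x (- R))) \<le> exp (pi * R\<^sup>2) * (norm c / N)" for x
    proof -
      have "norm (hf f' u (Complex x (- R))) = exp (pi * (- R)\<^sup>2) * norm (Sf f' (x *\<^sub>R u) ((- (- R)) *\<^sub>R u))"
        by (rule norm_hf_Complex[OF f'm sq u])
      also have "\<dots> = exp (pi * R\<^sup>2) * norm (Sf f' (x *\<^sub>R u) (R *\<^sub>R u))" by simp
      also have "\<dots> \<le> exp (pi * R\<^sup>2) * (norm c / N)"
        using hyp[of "R *\<^sub>R u" "x *\<^sub>R u"] u R unfolding c_def by (intro mult_left_mono) auto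
      finally show ?thesis .
    qed
    have h0: "hf f' u 0 = c" unfolding hf_def[OF f'm sq] c_def by simp
    have le: "norm (hf f' u z) \<le> norm (hf f' u 0)" if "z \<in> {z. \<bar>Im z\<bar> < R}" for z
    proof -
      have "norm (hf f' u z) \<le> exp (pi * R\<^sup>2) * (norm c / N)"
        by (rule strip_bound[OF holo R bnd b1 b2]) (use that in auto)
      also have "\<dots> \<le> N * (norm c / N)" using NE N by (intro mult_right_mono) auto
      also have "\<dots> = norm c" using N by simp
      finally show ?thesis unfolding h0 .
    qed
    have op: "open {z::complex. \<bar>Im z\<bar> < R}"
      by (intro open_Collect_less continuous_intros)
    have "hf f' u constant_on UNIV"
      by (rule maximum_modulus_principle[OF holo open_UNIV connected_UNIV op _ _ le]) (use R in auto)
    then obtain k where "\<And>z. hf f' u z = k" unfolding constant_on_def by blast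
    then show ?thesis using h0 by metis
  qed
  obtain u0 :: 'a where u0: "norm u0 = 1" using norm_Basis[OF SOME_Basis] by blast
  have ftu: "(LINT t|lborel. phi f' t * exp (\<i> * complex_of_real (t \<bullet> (2 * pi) *\<^sub>R (r *\<^sub>R u))))
      = c * complex_of_real (exp (- pi * r\<^sup>2))" if u: "norm u = 1" for u r
  proof -
    have csq: "(Complex 0 r)\<^sup>2 = - complex_of_real (r\<^sup>2)" by (simp add: complex_eq_iff power2_eq_square)
    have pt: "Complex 0 r * complex_of_real (t \<bullet> (2 * pi) *\<^sub>R u) = \<i> * complex_of_real (t \<bullet> (2 * pi) *\<^sub>R (r *\<^sub>R u))" for t
      by (simp add: complex_eq_iff)
    have "c = hf f' u (Complex 0 r)" using hconst[OF u] by simp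
    also have "\<dots> = exp (complex_of_real (pi * r\<^sup>2)) * (LINT t|lborel. phi f' t * exp (\<i> * complex_of_real (t \<bullet> (2 * pi) *\<^sub>R (r *\<^sub>R u))))"
      unfolding hf_def[OF f'm sq] csq pt by simp
    finally have "c = exp (complex_of_real (pi * r\<^sup>2)) * (LINT t|lborel. phi f' t * exp (\<i> * complex_of_real (t \<bullet> (2 * pi) *\<^sub>R (r *\<^sub>R u))))" .
    then have "(LINT t|lborel. phi f' t * exp (\<i> * complex_of_real (t \<bullet> (2 * pi) *\<^sub>R (r *\<^sub>R u)))) = c * exp (- complex_of_real (pi * r\<^sup>2))"
      by (simp add: exp_minus field_simps)
    also have "exp (- complex_of_real (pi * r\<^sup>2)) = complex_of_real (exp (- pi * r\<^sup>2))"
      by (simp only: of_real_minus[symmetric] exp_of_real) simp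
    finally show ?thesis .
  qed
  have ftphi: "(LINT t|lborel. phi f' t * exp (\<i> * complex_of_real (t \<bullet> (2 * pi) *\<^sub>R y)))
      = c * complex_of_real (exp (- pi * norm y ^ 2))" for y :: 'a
  proof (cases "y = 0")
    case True
    then show ?thesis using ftu[OF u0, of 0] by simp
  next
    case False
    then have u: "norm (y /\<^sub>R norm y) = 1" by simp
    have y: "norm y *\<^sub>R (y /\<^sub>R norm y) = y" using False by simp
    show ?thesis using ftu[OF u, of "norm y"] unfolding y by (simp add: power2_eq_square)
  qed
  define g1 where "g1 = (\<lambda>t::'a. complex_of_real (exp (- pi * 1 * norm t ^ 2)))"
  define I1 where "I1 = (LINT t|lborel. exp (- pi * 1 * norm (t::'a) ^ 2))"
  have I1pos: "I1 > 0" unfolding I1_def by (rule gauss_int_pos) simp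
  have ftg: "(LINT t|lborel. g1 t * exp (\<i> * complex_of_real (t \<bullet> (2 * pi) *\<^sub>R y)))
      = complex_of_real I1 * complex_of_real (exp (- pi * norm y ^ 2))" for y :: 'a
    using gauss_ft[of 1 y] unfolding g1_def I1_def by simp
  define \<psi> where "\<psi> = (\<lambda>t. phi f' t - (c / complex_of_real I1) * g1 t)"
  have [measurable]: "g1 \<in> borel_measurable borel" unfolding g1_def by measurable
  have [measurable]: "phi f' \<in> borel_measurable borel" by (rule phi_measurable[OF f'm sq])
  have [measurable]: "\<psi> \<in> borel_measurable borel" unfolding \<psi>_def by measurable
  have ephi: "expint (phi f')" by (rule phi_expint[OF f'm sq])
  have eg: "expint g1" unfolding g1_def by (rule gauss_expint) simp
  have iphi: "integrable lborel (\<lambda>t. phi f' t * exp (z * complex_of_real (t \<bullet> v)))" for z v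
    by (rule expint_integrable[OF ephi])
  have ig: "integrable lborel (\<lambda>t. g1 t * exp (z * complex_of_real (t \<bullet> v)))" for z v
    by (rule expint_integrable[OF eg])
  have intpsi: "integrable lborel \<psi>"
  proof -
    have i1: "integrable lborel (phi f')" using iphi[of 0 0] by simp
    have i2: "integrable lborel g1" using ig[of 0 0] by simp
    show ?thesis unfolding \<psi>_def by (intro Bochner_Integration.integrable_diff integrable_mult_right i1 i2)
  qed
  have ft0: "(LINT t|lborel. \<psi> t * exp (\<i> * complex_of_real (t \<bullet> (2 * pi) *\<^sub>R y))) = 0" for y
  proof -
    have "(LINT t|lborel. \<psi> t * exp (\<i> * complex_of_real (t \<bullet> (2 * pi) *\<^sub>R y)))
        = (LINT t|lborel. phi f' t * exp (\<i> * complex_of_real (t \<bullet> (2 * pi) *\<^sub>R y)) -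
             (c / complex_of_real I1) * (g1 t * exp (\<i> * complex_of_real (t \<bullet> (2 * pi) *\<^sub>R y))))"
      unfolding \<psi>_def by (simp add: algebra_simps)
    also have "\<dots> = (LINT t|lborel. phi f' t * exp (\<i> * complex_of_real (t \<bullet> (2 * pi) *\<^sub>R y))) -
        (c / complex_of_real I1) * (LINT t|lborel. g1 t * exp (\<i> * complex_of_real (t \<bullet> (2 * pi) *\<^sub>R y)))"
      apply (subst Bochner_Integration.integral_diff)
        apply (rule iphi)
       apply (rule integrable_mult_right, rule ig)
      by (simp only: integral_mult_right_zero)
    also have "\<dots> = 0" unfolding ftphi ftg using I1pos by simp
    finally show ?thesis .
  qed
  have "AE t in lborel. \<psi> t = 0" by (rule fourier_unique[OF _ intpsi ft0]) measurable
  then have ae: "AE t in lborel. f' t = c / complex_of_real I1"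
  proof eventually_elim
    case (elim t)
    then have "f' t * complex_of_real (exp (- pi * norm t ^ 2)) - (c / complex_of_real I1) * complex_of_real (exp (- pi * norm t ^ 2)) = 0"
      unfolding \<psi>_def phi_def[OF f'm sq] g1_def by simp
    then have "(f' t - c / complex_of_real I1) * complex_of_real (exp (- pi * norm t ^ 2)) = 0"
      by (simp only: left_diff_distrib)
    then show ?case by simp
  qed
  have "integrable lborel (\<lambda>_::'a. norm (c / complex_of_real I1) ^ 2)"
    by (rule integrable_cong_AE_imp[OF sq]) (use ae in \<open>auto elim!: AE_mp\<close>)
  then have "norm (c / complex_of_real I1) ^ 2 = 0" by (rule const_integrable_zero)
  then have "c / complex_of_real I1 = 0" by simp
  with ae have "AE t in lborel. f' t = 0" by simp
  with nz show False by simp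
qed

lemma borel_to_lebesgue:
  assumes "g \<in> borel_measurable borel"
  shows "g \<in> borel_measurable (lebesgue::'a::euclidean_space measure)"
  apply (rule measurable_completion)
  unfolding measurable_lborel2 by (rule assms)

theorem theorem1:
  fixes f :: "'a::euclidean_space \<Rightarrow> complex" and R N :: real
  assumes "R > 0" and "N > 1"
    and "square_integrable f"
    and "\<not> (AE t in lebesgue. f t = 0)"
    and "\<And>x \<omega>. norm \<omega> = R \<Longrightarrow> norm (stft gauss f x \<omega>) \<le> norm (l2_inner f gauss) / N"
  shows "R > sqrt (ln N / pi)"
proof -
  note R = assms(1) and N = assms(2) and hyp = assms(5)
  have fm[measurable]: "f \<in> borel_measurable lebesgue" and fsq: "integrable lebesgue (\<lambda>t. (norm (f t))\<^sup>2)"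
    using assms(3) unfolding square_integrable_def by auto
  obtain f' where f'm[measurable]: "f' \<in> borel_measurable borel" and ae: "AE t in lborel. f t = f' t"
    using borel_version[OF fm] by blast
  have aeL: "AE t in lebesgue. f t = f' t" using ae by (rule AE_completion)
  have f'm2[measurable]: "f' \<in> borel_measurable lebesgue"
    using f'm by (simp add: measurable_completion)
  have sq: "integrable lborel (\<lambda>t. norm (f' t) ^ 2)"
  proof -
    have "integrable lebesgue (\<lambda>t. norm (f' t) ^ 2)"
      by (rule integrable_cong_AE_imp[OF fsq]) (use aeL in \<open>auto elim!: AE_mp\<close>)
    then show ?thesis by (subst integrable_completion[symmetric]) auto
  qed
  have nz: "\<not> (AE t in lborel. f' t = 0)"
  proof
    assume "AE t in lborel. f' t = 0"
    then have "AE t in lebesgue. f' t = 0" by (rule AE_completion)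
    with aeL have "AE t in lebesgue. f t = 0" by eventually_elim simp
    with assms(4) show False by simp
  qed
  have stft_eq: "stft gauss f x \<omega> = Sf f' x \<omega>" for x \<omega>
  proof -
    define K where "K = (\<lambda>t::'a. exp (- (complex_of_real (2 * pi) * \<i> * complex_of_real (t \<bullet> \<omega>))))"
    define G where "G = (\<lambda>t::'a. cnj (complex_of_real (exp (- pi * (norm (t - x))\<^sup>2))))"
    have Kb[measurable]: "K \<in> borel_measurable borel" unfolding K_def by measurable
    have Gb[measurable]: "G \<in> borel_measurable borel" unfolding G_def complex_cnj_complex_of_real by measurable
    have mf: "(\<lambda>t. K t * f t * G t) \<in> borel_measurable lebesgue"
      using borel_to_lebesgue[OF Kb] fm borel_to_lebesgue[OF Gb] by (intro borel_measurable_times)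
    have mf'b: "(\<lambda>t. K t * f' t * G t) \<in> borel_measurable borel" by measurable
    have "stft gauss f x \<omega> = (LINT t|lebesgue. K t * f t * G t)"
      unfolding stft_def gauss_def K_def G_def by (rule refl)
    also have "\<dots> = (LINT t|lebesgue. K t * f' t * G t)"
      by (rule integral_cong_AE[OF mf borel_to_lebesgue[OF mf'b]]) (use aeL in \<open>auto elim!: AE_mp\<close>)
    also have "\<dots> = (LINT t|lborel. K t * f' t * G t)"
      by (rule integral_completion) (use mf'b in simp)
    also have "\<dots> = Sf f' x \<omega>"
      unfolding Sf_def[OF f'm sq] K_def G_def by simp
    finally show ?thesis .
  qed
  have l2_eq: "l2_inner f gauss = (LINT t|lborel. phi f' t)"
  proof -
    define G where "G = (\<lambda>t::'a. cnj (complex_of_real (exp (- pi * (norm t)\<^sup>2))))"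
    have Gb[measurable]: "G \<in> borel_measurable borel" unfolding G_def complex_cnj_complex_of_real by measurable
    have mf: "(\<lambda>t. f t * G t) \<in> borel_measurable lebesgue"
      using fm borel_to_lebesgue[OF Gb] by (intro borel_measurable_times)
    have mf'b: "(\<lambda>t. f' t * G t) \<in> borel_measurable borel" by measurable
    have "l2_inner f gauss = (LINT t|lebesgue. f t * G t)"
      unfolding l2_inner_def gauss_def G_def by (rule refl)
    also have "\<dots> = (LINT t|lebesgue. f' t * G t)"
      by (rule integral_cong_AE[OF mf borel_to_lebesgue[OF mf'b]]) (use aeL in \<open>auto elim!: AE_mp\<close>)
    also have "\<dots> = (LINT t|lborel. f' t * G t)"
      by (rule integral_completion) (use mf'b in simp)
    also have "\<dots> = (LINT t|lborel. phi f' t)"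
      unfolding phi_def[OF f'm sq] G_def by simp
    finally show ?thesis .
  qed
  have "N < exp (pi * R\<^sup>2)"
  proof (rule main_borel[OF f'm sq R N nz])
    fix x \<omega> :: 'a assume "norm \<omega> = R"
    then show "norm (Sf f' x \<omega>) \<le> norm (LINT t|lborel. phi f' t) / N"
      using hyp[of \<omega> x] unfolding stft_eq l2_eq by simp
  qed
  then have "ln N < pi * R\<^sup>2" using N by (simp add: ln_less_cancel_iff[symmetric] ln_exp)
  then have "ln N / pi < R\<^sup>2" by (simp add: divide_less_eq mult.commute)
  then have "sqrt (ln N / pi) < sqrt (R\<^sup>2)" by (rule real_sqrt_less_mono)
  then show ?thesis using R by simp
qed

end
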